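(* Let $\tau\in\mathbb{R}$ and $R\in\mathcal{R}_O\cap(\mathcal{L}_I\cup\mathcal{L}_{II}\cup\mathcal{L}_{III})$. Then: (A) if $\tau=0$, $\widetilde\beta_R(\tau)=0$; (B) if $\tau<0$: (b1) if $R$ has no critical points in $\mathbb{T}$, then $\widetilde\beta_R(\tau)=0$; (b2) if $R$ has at least one critical point in $\mathbb{T}$, then $\widetilde\beta_R(\tau)=0$ for $\tau\in(-1,0)$ and $\widetilde\beta_R(\tau)=|\tau|-1$ for $\tau\le-1$; (C) if $\tau>0$: (c1) if $R\in\mathcal{R}_O\cap\mathcal{L}_I$, then $\widetilde\beta_R(\tau)=0$; (c2) if $R\in\mathcal{R}_O\cap\mathcal{L}_{II}$, then $\widetilde\beta_R(\tau)=2\tau-1$ for $\tau>1/2$ and $\widetilde\beta_R(\tau)=0$ for $\tau\in(0,1/2]$; (c3) if $R\in\mathcal{R}_O\cap\mathcal{L}_{III}$, then $\widetilde\beta_R(\tau)=3\tau-1$ for $\tau>1/3$ and $\widetilde\beta_R(\tau)=0$ for $\tau\in(0,1/3]$.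
   Context: $\Delta$ is the unit disk, $\mathbb{T}=\partial\Delta$, $\overline{\Delta}=\Delta\cup\mathbb{T}$. $P_k$ denotes a polynomial of degree at most $k$. $\mathcal{R}$ is the class of rational functions $R$ with no poles in $\Delta$ and $R(0)=0,R'(0)=1$. A critical point of $R$ in $\mathbb{T}$ is a point of $\mathbb{T}$ where the rational function $R'$ vanishes. $\mathcal{L}_I$: those $R\in\mathcal{R}$ of the form $R=P_n/P_m$ with $P_n,P_m$ coprime and $P_m$ without zeros in $\overline{\Delta}$. $\mathcal{L}_{II}$: those $R\in\mathcal{R}$ of the form $R(z)=\frac{P_n(z)}{\prod_{j=1}^l(z-e^{i\theta_j})P_m(z)}$ with $l\ge1$, the $e^{i\theta_j}$ distinct, $P_m$ without zeros in $\overline{\Delta}$, numerator and denominator coprime. $\mathcal{L}_{III}$: those $R\in\mathcal{R}$ of the form $R(z)=\frac{P_n(z)}{\prod_{j=1}^l(z-e^{i\theta_j})^2\prod_{k=1}^t(z-e^{i\tilde\theta_k})P_m(z)}$ with $l\ge1$, $t\ge0$, the points $e^{i\theta_j},e^{i\tilde\theta_k}$ all distinct, $P_m$ without zeros in $\overline{\Delta}$, numerator and denominator coprime. $\mathcal{R}_O$: those $R\in\mathcal{R}$ such that $R'(z)=\frac{(z-z_1)\cdots(z-z_s)P_{\mathbf n}(z)}{P_{\mathbf m}(z)}$ with $s\ge0$, $z_1,\dots,z_s$ the distinct critical points of $R$ in $\mathbb{T}$, numerator and denominator coprime, $P_{\mathbf n}$ without zeros in $\mathbb{T}$ and $P_{\mathbf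 m}$ without zeros in $\Delta$ (i.e. every zero of $R'$ on $\mathbb{T}$ is simple). For $R\in\mathcal{R}$ choose $r_R\in(0,1)$ with $R'\ne0$ on $r_R<|z|<1$; for real $\tau$ the generalized integral means spectrum is $\widetilde\beta_R(\tau)=\limsup_{r\to1^-}\frac{\log\int_{-\pi}^{\pi}|R'(re^{i\theta})|^\tau d\theta}{|\log(1-r)|}$. *)

theory Defs
  imports "HOL-Analysis.Analysis" "HOL-Computational_Algebra.Computational_Algebra"
begin

text \<open>A rational function R is represented by a pair of complex polynomials (p, q)
  in lowest terms (coprime p q, q nonzero); R z = p z / q z.\<close>

definition ratfun :: "complex poly \<Rightarrow> complex poly \<Rightarrow> complex \<Rightarrow> complex" where
  "ratfun p q = (\<lambda>z. poly p z / poly q z)"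

definition classR :: "complex poly \<Rightarrow> complex poly \<Rightarrow> bool" where
  "classR p q \<longleftrightarrow> q \<noteq> 0 \<and> coprime p q \<and>
     (\<forall>z. cmod z < 1 \<longrightarrow> poly q z \<noteq> 0) \<and>
     ratfun p q 0 = 0 \<and> (ratfun p q has_field_derivative 1) (at 0)"

definition classL1 :: "complex poly \<Rightarrow> complex poly \<Rightarrow> bool" where
  "classL1 p q \<longleftrightarrow> classR p q \<and> (\<forall>z. cmod z \<le> 1 \<longrightarrow> poly q z \<noteq> 0)"

definition classL2 :: "complex poly \<Rightarrow> complex poly \<Rightarrow> bool" where
  "classL2 p q \<longleftrightarrow> classR p q \<and>
     (\<exists>S m. finite S \<and> S \<noteq> {} \<and> (\<forall>a\<in>S. cmod a = 1) \<and>
        (\<forall>z. cmod z \<le> 1 \<longrightarrow> poly m z \<noteq> 0) \<and>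
        q = (\<Prod>a\<in>S. [:-a, 1:]) * m)"

definition classL3 :: "complex poly \<Rightarrow> complex poly \<Rightarrow> bool" where
  "classL3 p q \<longleftrightarrow> classR p q \<and>
     (\<exists>S T m. finite S \<and> S \<noteq> {} \<and> finite T \<and> S \<inter> T = {} \<and>
        (\<forall>a\<in>S. cmod a = 1) \<and> (\<forall>b\<in>T. cmod b = 1) \<and>
        (\<forall>z. cmod z \<le> 1 \<longrightarrow> poly m z \<noteq> 0) \<and>
        q = (\<Prod>a\<in>S. [:-a, 1:] ^ 2) * (\<Prod>b\<in>T. [:-b, 1:]) * m)"

definition crit_T :: "complex poly \<Rightarrow> complex poly \<Rightarrow> complex set" where
  "crit_T p q = {w. cmod w = 1 \<and> poly q w \<noteq> 0 \<and> deriv (ratfun p q) w = 0}"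

text \<open>The class R_O. As rational functions,
  R' = (p' q - p q') / q^2; the identity R' = (z-z_1)...(z-z_s) A / B is stated by cross-multiplication.\<close>
definition classRO :: "complex poly \<Rightarrow> complex poly \<Rightarrow> bool" where
  "classRO p q \<longleftrightarrow> classR p q \<and>
     (\<exists>Z A B. finite Z \<and> Z = crit_T p q \<and> B \<noteq> 0 \<and>
        coprime ((\<Prod>z\<in>Z. [:-z, 1:]) * A) B \<and>
        (\<forall>z. cmod z = 1 \<longrightarrow> poly A z \<noteq> 0) \<and>
        (\<forall>z. cmod z < 1 \<longrightarrow> poly B z \<noteq> 0) \<and>
        (\<Prod>z\<in>Z. [:-z, 1:]) * A * q ^ 2 = (pderiv p * q - p * pderiv q) * B)"

definition beta_tilde :: "complex poly \<Rightarrow> complex poly \<Rightarrow> real \<Rightarrow> ereal" where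
  "beta_tilde p q \<tau> = Limsup (at_left (1::real))
     (\<lambda>r. ereal (ln (integral {-pi..pi}
                (\<lambda>\<theta>. cmod (deriv (ratfun p q) (complex_of_real r * cis \<theta>)) powr \<tau>))
              / \<bar>ln (1 - r)\<bar>))"

end

theory Submission
  imports Defs
begin

lemma cmod_cis_diff: "cmod (cis a - cis b) = 2 * \<bar>sin ((a - b) / 2)\<bar>"
proof -
  have "(cmod (cis a - cis b))^2 = (cos a - cos b)^2 + (sin a - sin b)^2"
    by (simp add: cmod_def cis.code)
  also have "\<dots> = 2 - 2 * cos (a - b)"
    by (simp add: cos_diff power2_eq_square algebra_simps)
  also have "cos (a - b) = 1 - 2 * sin ((a-b)/2)^2"
  proof -
    have "2 * ((a-b)/2) = a - b" by simp
    then show ?thesis by (metis cos_double_sin)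
  qed
  finally have "(cmod (cis a - cis b))^2 = (2 * \<bar>sin ((a - b) / 2)\<bar>)^2"
    by (simp add: power_mult_distrib)
  then show ?thesis
    by (rule power2_eq_imp_eq) auto
qed

lemma cmod_cis_diff_le: "cmod (cis a - cis b) \<le> \<bar>a - b\<bar>"
  using abs_sin_x_le_abs_x[of "(a-b)/2"] by (simp add: cmod_cis_diff)

lemma sin_ge_half: assumes "0 \<le> x" "x \<le> pi/2" shows "x/2 \<le> sin x"
proof -
  have "\<bar>sin x - (\<Sum>m<3. sin_coeff m * x ^ m)\<bar> \<le> inverse (fact 3) * \<bar>x\<bar> ^ 3"
    by (rule Maclaurin_sin_bound)
  moreover have "(\<Sum>m<3. sin_coeff m * x ^ m) = x"
    by (simp add: sin_coeff_def numeral_3_eq_3 lessThan_Suc)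
  ultimately have "\<bar>sin x - x\<bar> \<le> x^3/6" using assms by (simp add: fact_numeral)
  then have "x - x^3/6 \<le> sin x" by linarith
  moreover have "x^2 \<le> 3"
  proof -
    have "x \<le> 1.6" using assms pi_less_4 pi_approx by (simp add: abs_if split: if_splits)
    then have "x^2 \<le> 1.6^2" using assms by (intro power_mono) auto
    moreover have "(1.6::real)^2 \<le> 3" by (simp add: power2_eq_square)
    ultimately show ?thesis by linarith
  qed
  then have "x^3/6 \<le> x/2" using assms
    by (simp add: power3_eq_cube power2_eq_square mult_left_mono)
  ultimately show ?thesis by simp
qed

lemma cmod_cis_diff_ge: assumes "\<bar>a - b\<bar> \<le> pi" shows "\<bar>a - b\<bar> / 2 \<le> cmod (cis a - cis b)"
proof -
  have "\<bar>a-b\<bar>/2/2 \<le> sin (\<bar>a-b\<bar>/2)" using assms by (intro sin_ge_half) auto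
  moreover have "sin (\<bar>a-b\<bar>/2) = \<bar>sin ((a-b)/2)\<bar>"
  proof (cases "a \<le> b")
    case True
    have "0 \<le> sin ((b-a)/2)" using assms True by (intro sin_ge_zero) auto
    moreover have "sin ((a-b)/2) = - sin ((b-a)/2)"
      by (metis minus_diff_eq minus_divide_left sin_minus)
    ultimately show ?thesis using True by simp
  next
    case False
    have "0 \<le> sin ((a-b)/2)" using assms False by (intro sin_ge_zero) auto
    then show ?thesis using False by simp
  qed
  ultimately show ?thesis by (simp add: cmod_cis_diff)
qed

lemma int_kink_bound:
  fixes h e c :: real
  assumes h: "0 < h" "h \<le> 1" and e: "0 < e" "e < 1"
  shows "(\<lambda>\<theta>. (h + \<bar>\<theta> - c\<bar>) powr (e - 1)) integrable_on {-pi..pi}"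
    and "integral {-pi..pi} (\<lambda>\<theta>. (h + \<bar>\<theta> - c\<bar>) powr (e - 1))
           \<le> ((1 + \<bar>pi - c\<bar>) powr e + (1 + \<bar>pi + c\<bar>) powr e) / e"
proof -
  define F where "F = (\<lambda>\<theta>::real. ((h + max (\<theta> - c) 0) powr e - (h + max (c - \<theta>) 0) powr e) / e)"
  have cont: "continuous_on {-pi..pi} F"
    unfolding F_def using h e by (intro continuous_intros) auto
  have der: "(F has_vector_derivative (h + \<bar>x - c\<bar>) powr (e - 1)) (at x)"
    if "x \<in> {-pi<..<pi} - {c}" for x
  proof -
    from that have "x \<noteq> c" by auto
    show ?thesis
    proof (cases "x > c")
      case True
      have d: "((\<lambda>y. ((h + (y - c)) powr e - h powr e) / e) has_real_derivative
                 (h + \<bar>x - c\<bar>) powr (e - 1)) (at x)"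
      proof -
        have "((\<lambda>y. (h + (y - c)) powr e) has_real_derivative e * (h + (x - c)) powr (e - of_nat 1) * 1) (at x)" (is ?D1)
          by (rule DERIV_fun_powr) (use True h in \<open>auto intro!: derivative_eq_intros\<close>)
        note D1 = this
        have "((\<lambda>y. ((h + (y - c)) powr e - h powr e) / e) has_real_derivative
                 (e * (h + (x - c)) powr (e - of_nat 1) * 1 - 0) / e) (at x)"
          using DERIV_cdivide[OF DERIV_diff[OF D1 DERIV_const[of "h powr e"]], where c=e] by simp
        then show ?thesis using True e by simp
      qed
      have "(F has_real_derivative (h + \<bar>x - c\<bar>) powr (e - 1)) (at x)"
        by (rule has_field_derivative_transform_within_open[OF d, of "{c<..}"])
           (use True in \<open>auto simp: F_def\<close>)
      then show ?thesis by (simp add: has_real_derivative_iff_has_vector_derivative)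
    next
      case False
      with \<open>x \<noteq> c\<close> have lt: "x < c" by auto
      have d: "((\<lambda>y. (h powr e - (h + (c - y)) powr e) / e) has_real_derivative
                 (h + \<bar>x - c\<bar>) powr (e - 1)) (at x)"
      proof -
        have "((\<lambda>y. (h + (c - y)) powr e) has_real_derivative e * (h + (c - x)) powr (e - of_nat 1) * (-1)) (at x)"
          by (rule DERIV_fun_powr) (use lt h in \<open>auto intro!: derivative_eq_intros\<close>)
        note D1 = this
        have "((\<lambda>y. (h powr e - (h + (c - y)) powr e) / e) has_real_derivative
                 (0 - e * (h + (c - x)) powr (e - of_nat 1) * (-1)) / e) (at x)"
          using DERIV_cdivide[OF DERIV_diff[OF DERIV_const[of "h powr e"] D1], where c=e] by simp
        then show ?thesis using lt e by (simp add: abs_if)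
      qed
      have "(F has_real_derivative (h + \<bar>x - c\<bar>) powr (e - 1)) (at x)"
        by (rule has_field_derivative_transform_within_open[OF d, of "{..<c}"])
           (use lt in \<open>auto simp: F_def\<close>)
      then show ?thesis by (simp add: has_real_derivative_iff_has_vector_derivative)
    qed
  qed
  have hi: "((\<lambda>\<theta>. (h + \<bar>\<theta> - c\<bar>) powr (e - 1)) has_integral (F pi - F (-pi))) {-pi..pi}"
    by (rule fundamental_theorem_of_calculus_interior_strong[of "{c}"]) (use der cont in auto)
  then show "(\<lambda>\<theta>. (h + \<bar>\<theta> - c\<bar>) powr (e - 1)) integrable_on {-pi..pi}" by blast
  have "F pi \<le> (1 + \<bar>pi - c\<bar>) powr e / e"
  proof -
    have "(h + max (pi - c) 0) powr e \<le> (1 + \<bar>pi - c\<bar>) powr e"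
      using h e by (intro powr_mono2) auto
    moreover have "0 \<le> (h + max (c - pi) 0) powr e" by simp
    ultimately have "(h + max (pi - c) 0) powr e - (h + max (c - pi) 0) powr e \<le> (1 + \<bar>pi - c\<bar>) powr e"
      by linarith
    then show ?thesis unfolding F_def using e by (intro divide_right_mono) auto
  qed
  moreover have "- F (-pi) \<le> (1 + \<bar>pi + c\<bar>) powr e / e"
  proof -
    have "(h + max (c - -pi) 0) powr e \<le> (1 + \<bar>pi + c\<bar>) powr e"
      using h e by (intro powr_mono2) auto
    moreover have "0 \<le> (h + max (-pi - c) 0) powr e" by simp
    ultimately have "(h + max (c - -pi) 0) powr e - (h + max (-pi - c) 0) powr e \<le> (1 + \<bar>pi + c\<bar>) powr e"
      by linarith
    then have "((h + max (c - -pi) 0) powr e - (h + max (-pi - c) 0) powr e) / e \<le> (1 + \<bar>pi + c\<bar>) powr e / e"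
      using e by (intro divide_right_mono) auto
    then show ?thesis unfolding F_def by (simp add: minus_divide_left)
  qed
  ultimately show "integral {-pi..pi} (\<lambda>\<theta>. (h + \<bar>\<theta> - c\<bar>) powr (e - 1))
           \<le> ((1 + \<bar>pi - c\<bar>) powr e + (1 + \<bar>pi + c\<bar>) powr e) / e"
    using integral_unique[OF hi] by (simp add: add_divide_distrib)
qed

lemma circ_lb:
  assumes "0 \<le> r" "r < 1" "cmod w = 1"
  shows "1 - r \<le> cmod (complex_of_real r * cis t - w)"
proof -
  have "cmod w \<le> cmod (w - complex_of_real r * cis t) + cmod (complex_of_real r * cis t)"
    using norm_triangle_ineq[of "w - complex_of_real r * cis t" "complex_of_real r * cis t"] by simp
  then show ?thesis using assms by (simp add: norm_mult norm_minus_commute)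
qed

lemma circ_cont:
  assumes "0 \<le> r" "r < 1" "cmod w = 1"
  shows "continuous_on S (\<lambda>t. cmod (complex_of_real r * cis t - w) powr a)"
proof -
  have "\<forall>t\<in>S. cmod (complex_of_real r * cis t - w) \<noteq> 0"
    using circ_lb[OF assms] assms by (smt (verit))
  then show ?thesis by (intro continuous_intros) auto
qed

lemma powr_split_bound:
  fixes t h \<alpha> e \<gamma> :: real
  assumes "0 < h" "h \<le> 1" "h \<le> t" "t \<le> 1 + pi" "\<alpha> < 0" "0 < e" "e < 1" "\<gamma> \<le> 0" "\<gamma> \<le> \<alpha> + 1 - e"
  shows "t powr \<alpha> \<le> (1 + pi) * h powr \<gamma> * t powr (e - 1)"
proof -
  have tpos: "0 < t" using assms by simp
  have split: "t powr \<alpha> = t powr (\<alpha> - e + 1) * t powr (e - 1)"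
    by (simp add: powr_add[symmetric])
  have hg1: "1 \<le> h powr \<gamma>"
    using powr_mono'[of \<gamma> 0 h] assms by simp
  have "t powr (\<alpha> - e + 1) \<le> (1 + pi) * h powr \<gamma>"
  proof (cases "\<alpha> - e + 1 \<le> 0")
    case True
    have "t powr (\<alpha> - e + 1) \<le> h powr (\<alpha> - e + 1)"
      using powr_mono2'[OF True] assms by simp
    also have "\<dots> \<le> h powr \<gamma>"
      using powr_mono'[of \<gamma> "\<alpha> - e + 1" h] assms by simp
    also have "\<dots> \<le> (1 + pi) * h powr \<gamma>"
    proof -
      have "0 \<le> pi * h powr \<gamma>" by simp
      then show ?thesis by (simp add: distrib_right)
    qed
    finally show ?thesis .
  next
    case False
    have "t powr (\<alpha> - e + 1) \<le> (1 + pi) powr (\<alpha> - e + 1)"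
      using False assms by (intro powr_mono2) auto
    also have "\<dots> \<le> (1 + pi) powr 1"
      using assms pi_gt_zero by (intro powr_mono) auto
    also have "\<dots> \<le> (1 + pi) * h powr \<gamma>"
    proof -
      have "(1 + pi) * 1 \<le> (1 + pi) * h powr \<gamma>" using hg1 pi_gt_zero by (intro mult_left_mono) auto
      then show ?thesis by simp
    qed
    finally show ?thesis .
  qed
  then show ?thesis unfolding split
    using tpos by (intro mult_right_mono) auto
qed

lemma single_bound:
  fixes w :: complex and \<alpha> e \<gamma> :: real
  assumes w: "cmod w = 1" and a: "\<alpha> < 0" and e: "0 < e" "e < 1" and g: "\<gamma> \<le> 0" "\<gamma> \<le> \<alpha> + 1 - e"
  shows "\<exists>C. \<forall>r. 0 \<le> r \<and> r < 1 \<longrightarrow>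
           integral {-pi..pi} (\<lambda>\<theta>. cmod (complex_of_real r * cis \<theta> - w) powr \<alpha>) \<le> C * (1 - r) powr \<gamma>"
proof -
  define \<phi> where "\<phi> = Arg w"
  have w\<phi>: "cis \<phi> = w"
  proof -
    have "w \<noteq> 0" using w by auto
    then show ?thesis using w cis_Arg[of w] unfolding \<phi>_def by (simp add: sgn_div_norm)
  qed
  have \<phi>b: "-pi < \<phi>" "\<phi> \<le> pi" using Arg_bounded unfolding \<phi>_def by auto
  define Q where "Q = (\<lambda>c::real. ((1 + \<bar>pi - c\<bar>) powr e + (1 + \<bar>pi + c\<bar>) powr e) / e)"
  define C where "C = 8 powr (-\<alpha>) * (1 + pi) * (Q (\<phi> - 2*pi) + Q \<phi> + Q (\<phi> + 2*pi))"
  show ?thesis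
  proof (intro exI[of _ C] allI impI)
    fix r :: real assume r: "0 \<le> r \<and> r < 1"
    define h where "h = 1 - r"
    have h: "0 < h" "h \<le> 1" using r unfolding h_def by auto
    define g where "g = (\<lambda>c \<theta>. (h + \<bar>\<theta> - c\<bar>) powr (e - 1))"
    have gi: "g c integrable_on {-pi..pi}" for c
      unfolding g_def using int_kink_bound(1)[OF h e] .
    have gI: "integral {-pi..pi} (g c) \<le> Q c" for c
      unfolding g_def Q_def using int_kink_bound(2)[OF h e] .
    have pt: "cmod (complex_of_real r * cis \<theta> - w) powr \<alpha> \<le>
           8 powr (-\<alpha>) * (1 + pi) * h powr \<gamma> * (g (\<phi> - 2*pi) \<theta> + g \<phi> \<theta> + g (\<phi> + 2*pi) \<theta>)"
      if th: "\<theta> \<in> {-pi..pi}" for \<theta>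
    proof -
      obtain c where c: "c \<in> {\<phi> - 2*pi, \<phi>, \<phi> + 2*pi}" "\<bar>\<theta> - c\<bar> \<le> pi"
      proof -
        consider "\<theta> - \<phi> < -pi" | "\<bar>\<theta> - \<phi>\<bar> \<le> pi" | "\<theta> - \<phi> > pi" by linarith
        then show ?thesis
        proof cases
          case 1 then show ?thesis using that[of "\<phi> - 2*pi"] th \<phi>b by auto
        next
          case 2 then show ?thesis using that[of "\<phi>"] by auto
        next
          case 3 then show ?thesis using that[of "\<phi> + 2*pi"] th \<phi>b by auto
        qed
      qed
      have cisc: "cis c = w"
        using c(1) w\<phi> by (auto simp: cis.code cos_diff sin_diff cos_add sin_add)
      define m where "m = cmod (complex_of_real r * cis \<theta> - w)"
      define X where "X = cmod (cis \<theta> - w)"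
      have X: "\<bar>\<theta> - c\<bar> / 2 \<le> X" unfolding X_def cisc[symmetric] by (rule cmod_cis_diff_ge[OF c(2)])
      have mh: "h \<le> m" unfolding m_def h_def by (rule circ_lb) (use r w in auto)
      have "X \<le> cmod (cis \<theta> - complex_of_real r * cis \<theta>) + m"
        unfolding X_def m_def by (rule norm_diff_triangle_le) auto
      moreover have "cmod (cis \<theta> - complex_of_real r * cis \<theta>) = h"
      proof -
        have "cis \<theta> - complex_of_real r * cis \<theta> = complex_of_real (1 - r) * cis \<theta>"
          by (simp add: algebra_simps)
        then have "cmod (cis \<theta> - complex_of_real r * cis \<theta>) = \<bar>1 - r\<bar>"
          by (simp only: norm_mult norm_cis norm_of_real) simp
        then show ?thesis using r by (simp add: h_def)
      qed
      ultimately have mX: "X - h \<le> m" by simp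
      have "h + \<bar>\<theta> - c\<bar> \<le> 8 * m"
      proof -
        define d where "d = \<bar>\<theta> - c\<bar>"
        have "d / 2 \<le> X" using X d_def by simp
        then have "d \<le> 2 * X" by simp
        then show ?thesis unfolding d_def[symmetric] using mh mX h by linarith
      qed
      then have mlb: "(h + \<bar>\<theta> - c\<bar>) / 8 \<le> m" by simp
      have tpos: "0 < (h + \<bar>\<theta> - c\<bar>) / 8" using h by simp
      have "m powr \<alpha> \<le> ((h + \<bar>\<theta> - c\<bar>) / 8) powr \<alpha>"
        by (rule powr_mono2'[OF _ tpos mlb]) (use a in simp)
      also have "\<dots> = 8 powr (-\<alpha>) * (h + \<bar>\<theta> - c\<bar>) powr \<alpha>"
        using h by (simp add: powr_divide powr_minus_divide)
      also have "\<dots> \<le> 8 powr (-\<alpha>) * ((1 + pi) * h powr \<gamma> * (h + \<bar>\<theta> - c\<bar>) powr (e - 1))"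
        by (intro mult_left_mono powr_split_bound) (use h c a e g in auto)
      also have "(h + \<bar>\<theta> - c\<bar>) powr (e - 1) \<le> g (\<phi> - 2*pi) \<theta> + g \<phi> \<theta> + g (\<phi> + 2*pi) \<theta>"
        using c(1) unfolding g_def by (auto intro: add_nonneg_nonneg)
      then have "8 powr (-\<alpha>) * ((1 + pi) * h powr \<gamma> * (h + \<bar>\<theta> - c\<bar>) powr (e - 1))
          \<le> 8 powr (-\<alpha>) * ((1 + pi) * h powr \<gamma> * (g (\<phi> - 2*pi) \<theta> + g \<phi> \<theta> + g (\<phi> + 2*pi) \<theta>))"
        using pi_gt_zero by (intro mult_left_mono) auto
      finally show ?thesis unfolding m_def by (simp add: mult.assoc)
    qed
    have int1: "(\<lambda>\<theta>. cmod (complex_of_real r * cis \<theta> - w) powr \<alpha>) integrable_on {-pi..pi}"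
      by (rule integrable_continuous_interval, rule circ_cont) (use r w in auto)
    have int2: "(\<lambda>\<theta>. 8 powr (-\<alpha>) * (1 + pi) * h powr \<gamma> * (g (\<phi> - 2*pi) \<theta> + g \<phi> \<theta> + g (\<phi> + 2*pi) \<theta>))
        integrable_on {-pi..pi}"
      by (intro integrable_on_mult_right integrable_add gi)
    have "integral {-pi..pi} (\<lambda>\<theta>. cmod (complex_of_real r * cis \<theta> - w) powr \<alpha>)
        \<le> integral {-pi..pi} (\<lambda>\<theta>. 8 powr (-\<alpha>) * (1 + pi) * h powr \<gamma> * (g (\<phi> - 2*pi) \<theta> + g \<phi> \<theta> + g (\<phi> + 2*pi) \<theta>))"
      by (rule integral_le[OF int1 int2 pt])
    also have "\<dots> = 8 powr (-\<alpha>) * (1 + pi) * h powr \<gamma> *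
        (integral {-pi..pi} (g (\<phi> - 2*pi)) + integral {-pi..pi} (g \<phi>) + integral {-pi..pi} (g (\<phi> + 2*pi)))"
      by (simp add: integral_add gi integrable_add)
    also have "\<dots> \<le> 8 powr (-\<alpha>) * (1 + pi) * h powr \<gamma> * (Q (\<phi> - 2*pi) + Q \<phi> + Q (\<phi> + 2*pi))"
      using gI pi_gt_zero by (intro mult_left_mono add_mono) auto
    also have "\<dots> = C * (1 - r) powr \<gamma>" unfolding C_def h_def by simp
    finally show "integral {-pi..pi} (\<lambda>\<theta>. cmod (complex_of_real r * cis \<theta> - w) powr \<alpha>) \<le> C * (1 - r) powr \<gamma>" .
  qed
qed

lemma finite_pos_lb:
  assumes "finite A" "\<forall>x\<in>A. 0 < f x"
  shows "\<exists>d>0. d \<le> (1::real) \<and> (\<forall>x\<in>A. d \<le> f x)"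
proof -
  define d where "d = Min (insert 1 (f ` A))"
  have "d \<in> insert 1 (f ` A)" unfolding d_def using assms by (intro Min_in) auto
  then have "0 < d" using assms by auto
  moreover have "d \<le> 1" "\<forall>x\<in>A. d \<le> f x" unfolding d_def using assms by auto
  ultimately show ?thesis by blast
qed

lemma powr_between:
  fixes x lo hi a :: real
  assumes "0 < lo" "lo \<le> x" "x \<le> hi"
  shows "min (lo powr a) (hi powr a) \<le> x powr a" "x powr a \<le> max (lo powr a) (hi powr a)"
proof -
  have "(lo powr a \<le> x powr a \<and> x powr a \<le> hi powr a) \<or> (hi powr a \<le> x powr a \<and> x powr a \<le> lo powr a)"
  proof (cases "0 \<le> a")
    case True
    then show ?thesis using assms by (auto intro!: powr_mono2)
  next
    case False
    then have "a \<le> 0" by simp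
    then show ?thesis using assms powr_mono2'[of a lo x] powr_mono2'[of a x hi] by auto
  qed
  then show "min (lo powr a) (hi powr a) \<le> x powr a" "x powr a \<le> max (lo powr a) (hi powr a)" by auto
qed

definition Jf :: "complex set \<Rightarrow> (complex \<Rightarrow> real) \<Rightarrow> real \<Rightarrow> real \<Rightarrow> real" where
  "Jf W \<alpha> r \<theta> = (\<Prod>w\<in>W. cmod (complex_of_real r * cis \<theta> - w) powr \<alpha> w)"

lemma circ_ub:
  assumes "0 \<le> r" "r < 1" "cmod w = 1"
  shows "cmod (complex_of_real r * cis t - w) \<le> 2"
proof -
  have "cmod (complex_of_real r * cis t - w) \<le> cmod (complex_of_real r * cis t) + cmod w"
    by (rule norm_triangle_ineq4)
  then show ?thesis using assms by (simp add: norm_mult)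
qed

lemma Jf_cont:
  assumes "0 \<le> r" "r < 1" "\<forall>w\<in>W. cmod w = 1"
  shows "continuous_on S (Jf W \<alpha> r)"
  unfolding Jf_def
  by (intro continuous_on_prod ballI circ_cont) (use assms in auto)

lemma Jf_nonneg: "0 \<le> Jf W \<alpha> r \<theta>"
  unfolding Jf_def by (intro prod_nonneg) auto

lemma Jf_integrable:
  assumes "0 \<le> r" "r < 1" "\<forall>w\<in>W. cmod w = 1"
  shows "Jf W \<alpha> r integrable_on {-pi..pi}"
  by (rule integrable_continuous_interval, rule Jf_cont) (use assms in auto)

lemma int_lower:
  fixes f :: "real \<Rightarrow> real"
  assumes "f integrable_on {-pi..pi}" "continuous_on {-pi..pi} f" "\<forall>x\<in>{-pi..pi}. 0 \<le> f x"
    "-pi \<le> a" "a \<le> b" "b \<le> pi" "\<forall>x\<in>{a..b}. v \<le> f x"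
  shows "v * (b - a) \<le> integral {-pi..pi} f"
proof -
  have sub: "{a..b} \<subseteq> {-pi..pi}" using assms by auto
  have fi: "f integrable_on {a..b}"
    by (rule integrable_continuous_interval, rule continuous_on_subset[OF assms(2) sub])
  have "integral {a..b} (\<lambda>x. v) \<le> integral {a..b} f"
    by (rule integral_le) (use fi assms in auto)
  moreover have "integral {a..b} (\<lambda>x. v) = v * (b - a)" using assms by simp
  moreover have "integral {a..b} f \<le> integral {-pi..pi} f"
    by (rule integral_subset_le[OF sub fi assms(1) assms(3)])
  ultimately show ?thesis using assms(5) by (simp add: mult.commute)
qed

lemma J_upper:
  fixes W :: "complex set" and \<alpha> :: "complex \<Rightarrow> real"
  assumes W: "finite W" "\<forall>w\<in>W. cmod w = 1" and e: "0 < e" "e < 1"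
    and b: "0 \<le> \<beta>" "\<forall>w\<in>W. - \<alpha> w - 1 \<le> \<beta>"
  shows "\<exists>C. \<forall>r. 0 \<le> r \<and> r < 1 \<longrightarrow> integral {-pi..pi} (Jf W \<alpha> r) \<le> C * (1 - r) powr (-\<beta> - e)"
proof -
  define \<gamma> where "\<gamma> = -\<beta> - e"
  have g: "\<gamma> \<le> 0" "\<forall>w\<in>W. \<gamma> \<le> \<alpha> w + 1 - e" using b e unfolding \<gamma>_def by auto
  have fin2: "finite {(w, w'). w \<in> W \<and> w' \<in> W \<and> w \<noteq> w'}"
    by (rule finite_subset[of _ "W \<times> W"]) (use W in auto)
  obtain \<delta> where \<delta>: "0 < \<delta>" "\<delta> \<le> 1"
    "\<forall>x\<in>{(w, w'). w \<in> W \<and> w' \<in> W \<and> w \<noteq> w'}. \<delta> \<le> (\<lambda>(w,w'). cmod (w - w') / 2) x"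
    using finite_pos_lb[OF fin2, of "\<lambda>(w,w'). cmod (w - w') / 2"] by auto
  have sep: "2 * \<delta> \<le> cmod (w - w')" if "w \<in> W" "w' \<in> W" "w \<noteq> w'" for w w'
  proof -
    have "\<delta> * 2 \<le> cmod (w - w')" using \<delta>(3) that by auto
    then show ?thesis by (simp add: mult.commute)
  qed
  define B where "B = (\<lambda>w. max (\<delta> powr \<alpha> w) (2 powr \<alpha> w))"
  define K where "K = (\<Prod>w\<in>W. max 1 (B w))"
  have K1: "1 \<le> K" unfolding K_def by (intro prod_ge_1) auto
  define f where "f = (\<lambda>w r \<theta>. cmod (complex_of_real r * cis \<theta> - w) powr \<alpha> w)"
  have fint: "f w r integrable_on {-pi..pi}" if "w \<in> W" "0 \<le> r" "r < 1" for w r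
    unfolding f_def by (rule integrable_continuous_interval, rule circ_cont) (use that W in auto)
  have perw: "\<exists>C. \<forall>r. 0 \<le> r \<and> r < 1 \<longrightarrow> integral {-pi..pi} (f w r) \<le> C * (1 - r) powr \<gamma>"
    if w: "w \<in> W" for w
  proof (cases "\<alpha> w < 0")
    case True
    show ?thesis unfolding f_def
      by (rule single_bound) (use W w True e g in auto)
  next
    case False
    show ?thesis
    proof (intro exI[of _ "2 * pi * 2 powr \<alpha> w"] allI impI)
      fix r :: real assume r: "0 \<le> r \<and> r < 1"
      have "integral {-pi..pi} (f w r) \<le> integral {-pi..pi} (\<lambda>\<theta>. 2 powr \<alpha> w)"
      proof (rule integral_le)
        show "f w r integrable_on {-pi..pi}" using fint w r by auto
        show "(\<lambda>\<theta>. 2 powr \<alpha> w) integrable_on {-pi..pi}"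
          by (intro integrable_continuous_interval continuous_intros)
        fix \<theta> show "f w r \<theta> \<le> 2 powr \<alpha> w"
          unfolding f_def using False circ_ub[of r w \<theta>] r W w by (intro powr_mono2) auto
      qed
      also have "\<dots> = 2 * pi * 2 powr \<alpha> w" by simp
      also have "\<dots> \<le> 2 * pi * 2 powr \<alpha> w * (1 - r) powr \<gamma>"
      proof -
        have "1 \<le> (1 - r) powr \<gamma>" using powr_mono'[of \<gamma> 0 "1 - r"] g r by simp
        then show ?thesis using mult_left_mono[of 1 "(1 - r) powr \<gamma>" "2 * pi * 2 powr \<alpha> w"] by simp
      qed
      finally show "integral {-pi..pi} (f w r) \<le> 2 * pi * 2 powr \<alpha> w * (1 - r) powr \<gamma>" .
    qed
  qed
  then obtain Cw where Cw: "\<forall>w\<in>W. \<forall>r. 0 \<le> r \<and> r < 1 \<longrightarrow> integral {-pi..pi} (f w r) \<le> Cw w * (1 - r) powr \<gamma>"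
    by metis
  have pt: "Jf W \<alpha> r \<theta> \<le> K * (1 + (\<Sum>w\<in>W. f w r \<theta>))" if r: "0 \<le> r" "r < 1" for r \<theta>
  proof -
    define z where "z = complex_of_real r * cis \<theta>"
    have fz: "f w r \<theta> = cmod (z - w) powr \<alpha> w" for w unfolding f_def z_def by simp
    have Jz: "Jf W \<alpha> r \<theta> = (\<Prod>w\<in>W. f w r \<theta>)" unfolding Jf_def f_def by simp
    have fpos: "0 \<le> f w r \<theta>" for w unfolding f_def by simp
    have sum0: "0 \<le> (\<Sum>w\<in>W. f w r \<theta>)" by (intro sum_nonneg fpos)
    have ub2: "cmod (z - w) \<le> 2" if "w \<in> W" for w unfolding z_def by (rule circ_ub) (use r W that in auto)
    have fB: "f w r \<theta> \<le> max 1 (B w)" if "w \<in> W" "\<delta> \<le> cmod (z - w)" for w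
    proof -
      have "f w r \<theta> \<le> B w" unfolding fz B_def
        by (rule powr_between(2)) (use that \<delta> ub2 in auto)
      then show ?thesis by simp
    qed
    show ?thesis
    proof (cases "\<forall>w\<in>W. \<delta> \<le> cmod (z - w)")
      case True
      have "Jf W \<alpha> r \<theta> \<le> K" unfolding Jz K_def
        by (intro prod_mono) (use True fB fpos in auto)
      also have "\<dots> \<le> K * (1 + (\<Sum>w\<in>W. f w r \<theta>))"
        using mult_left_mono[of 1 "1 + (\<Sum>w\<in>W. f w r \<theta>)" K] K1 sum0 by simp
      finally show ?thesis .
    next
      case False
      then obtain w0 where w0: "w0 \<in> W" "cmod (z - w0) < \<delta>" by auto
      have far: "\<delta> \<le> cmod (z - w)" if "w \<in> W - {w0}" for w
      proof -
        have "2 * \<delta> \<le> cmod (w - w0)" using sep[of w w0] that w0 by auto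
        moreover have "cmod (w - w0) \<le> cmod (z - w) + cmod (z - w0)"
          by (metis norm_diff_triangle_le norm_minus_commute order_refl)
        ultimately show ?thesis using w0 by linarith
      qed
      have "Jf W \<alpha> r \<theta> = f w0 r \<theta> * (\<Prod>w\<in>W - {w0}. f w r \<theta>)"
        unfolding Jz using prod.remove[OF W(1) w0(1)] by simp
      also have "\<dots> \<le> f w0 r \<theta> * (\<Prod>w\<in>W - {w0}. max 1 (B w))"
        by (intro mult_left_mono prod_mono) (use far fB fpos in auto)
      also have "(\<Prod>w\<in>W - {w0}. max 1 (B w)) \<le> K"
      proof -
        have "K = max 1 (B w0) * (\<Prod>w\<in>W - {w0}. max 1 (B w))"
          unfolding K_def using prod.remove[OF W(1) w0(1)] by simp
        moreover have "1 \<le> (\<Prod>w\<in>W - {w0}. max 1 (B w))" by (intro prod_ge_1) auto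
        ultimately show ?thesis
          using mult_right_mono[of 1 "max 1 (B w0)" "(\<Prod>w\<in>W - {w0}. max 1 (B w))"] by simp
      qed
      then have "f w0 r \<theta> * (\<Prod>w\<in>W - {w0}. max 1 (B w)) \<le> f w0 r \<theta> * K"
        using fpos by (intro mult_left_mono) auto
      also have "\<dots> \<le> K * (1 + (\<Sum>w\<in>W. f w r \<theta>))"
      proof -
        have "f w0 r \<theta> \<le> (\<Sum>w\<in>W. f w r \<theta>)"
          by (rule member_le_sum) (use w0 W fpos in auto)
        then have "f w0 r \<theta> \<le> 1 + (\<Sum>w\<in>W. f w r \<theta>)" by simp
        then show ?thesis using K1 by (simp add: mult.commute mult_left_mono)
      qed
      finally show ?thesis .
    qed
  qed
  define C where "C = K * (2 * pi + (\<Sum>w\<in>W. Cw w))"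
  show ?thesis
  proof (intro exI[of _ C] allI impI)
    fix r :: real assume r: "0 \<le> r \<and> r < 1"
    have hg: "1 \<le> (1 - r) powr \<gamma>" using powr_mono'[of \<gamma> 0 "1 - r"] g r by simp
    have si: "(\<lambda>\<theta>. \<Sum>w\<in>W. f w r \<theta>) integrable_on {-pi..pi}"
      by (intro integrable_sum) (use W fint r in auto)
    have "integral {-pi..pi} (Jf W \<alpha> r) \<le> integral {-pi..pi} (\<lambda>\<theta>. K * (1 + (\<Sum>w\<in>W. f w r \<theta>)))"
    proof (rule integral_le)
      show "Jf W \<alpha> r integrable_on {-pi..pi}" by (rule Jf_integrable) (use r W in auto)
      show "(\<lambda>\<theta>. K * (1 + (\<Sum>w\<in>W. f w r \<theta>))) integrable_on {-pi..pi}"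
        by (intro integrable_on_mult_right integrable_add si integrable_continuous_interval continuous_intros)
      fix \<theta> show "Jf W \<alpha> r \<theta> \<le> K * (1 + (\<Sum>w\<in>W. f w r \<theta>))" using pt r by auto
    qed
    also have "\<dots> = K * (2 * pi + (\<Sum>w\<in>W. integral {-pi..pi} (f w r)))"
    proof -
      have "integral {-pi..pi} (\<lambda>\<theta>. 1 + (\<Sum>w\<in>W. f w r \<theta>)) = integral {-pi..pi} (\<lambda>\<theta>. 1) + integral {-pi..pi} (\<lambda>\<theta>. \<Sum>w\<in>W. f w r \<theta>)"
        by (rule integral_add) (use si in \<open>auto intro: integrable_continuous_interval continuous_intros\<close>)
      also have "integral {-pi..pi} (\<lambda>\<theta>. \<Sum>w\<in>W. f w r \<theta>) = (\<Sum>w\<in>W. integral {-pi..pi} (f w r))"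
        by (rule integral_sum) (use W fint r in auto)
      finally show ?thesis by simp
    qed
    also have "\<dots> \<le> K * (2 * pi * (1 - r) powr \<gamma> + (\<Sum>w\<in>W. Cw w * (1 - r) powr \<gamma>))"
    proof -
      have "2 * pi \<le> 2 * pi * (1 - r) powr \<gamma>"
        using mult_left_mono[of 1 "(1 - r) powr \<gamma>" "2 * pi"] hg by simp
      moreover have "(\<Sum>w\<in>W. integral {-pi..pi} (f w r)) \<le> (\<Sum>w\<in>W. Cw w * (1 - r) powr \<gamma>)"
        by (intro sum_mono) (use Cw r in auto)
      ultimately show ?thesis using K1 by (intro mult_left_mono add_mono) auto
    qed
    also have "\<dots> = C * (1 - r) powr \<gamma>"
      unfolding C_def by (simp add: sum_distrib_right algebra_simps)
    finally show "integral {-pi..pi} (Jf W \<alpha> r) \<le> C * (1 - r) powr (-\<beta> - e)" unfolding \<gamma>_def .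
  qed
qed

lemma cis_sub_r:
  assumes "0 \<le> r" "r \<le> 1"
  shows "cmod (cis t - complex_of_real r * cis t) = 1 - r"
proof -
  have "cis t - complex_of_real r * cis t = complex_of_real (1 - r) * cis t"
    by (simp add: algebra_simps)
  then have "cmod (cis t - complex_of_real r * cis t) = \<bar>1 - r\<bar>"
    by (simp only: norm_mult norm_cis norm_of_real) simp
  then show ?thesis using assms by simp
qed

lemma tri3: "cmod (a - c) \<le> cmod (a - b) + cmod (b - c)"
  using norm_triangle_ineq[of "a - b" "b - c"] by simp

lemma J_lower0:
  fixes W :: "complex set" and \<alpha> :: "complex \<Rightarrow> real"
  assumes W: "finite W" "\<forall>w\<in>W. cmod w = 1"
  shows "\<exists>c>0. \<exists>r0<1. 0 \<le> r0 \<and> (\<forall>r. r0 \<le> r \<and> r < 1 \<longrightarrow> c \<le> integral {-pi..pi} (Jf W \<alpha> r))"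
proof -
  have "infinite ({-1/2..1/2::real} - Im ` W)"
    by (rule Diff_infinite_finite) (use W in auto)
  then obtain y where y: "y \<in> {-1/2..1/2}" "y \<notin> Im ` W"
    using infinite_imp_nonempty by blast
  define \<theta>0 where "\<theta>0 = arcsin y"
  have s0: "sin \<theta>0 = y" unfolding \<theta>0_def using y by simp
  have t0: "-(pi/2) \<le> \<theta>0" "\<theta>0 \<le> pi/2" unfolding \<theta>0_def using y arcsin_bounded[of y] by auto
  have notW: "cis \<theta>0 \<noteq> w" if "w \<in> W" for w
  proof
    assume "cis \<theta>0 = w"
    then have "Im w = y" using s0 by auto
    then show False using y that by auto
  qed
  obtain d where d: "0 < d" "d \<le> 1" "\<forall>w\<in>W. d \<le> cmod (cis \<theta>0 - w)"
    using finite_pos_lb[OF W(1), of "\<lambda>w. cmod (cis \<theta>0 - w)"] notW by auto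
  define v where "v = (\<Prod>w\<in>W. min ((d/2) powr \<alpha> w) (2 powr \<alpha> w))"
  have vpos: "0 < v" unfolding v_def using d by (intro prod_pos) auto
  define \<delta> where "\<delta> = d / 4"
  have c0: "0 < v * (2 * \<delta>)" using vpos d unfolding \<delta>_def by simp
  have r00: "1 - d/4 < 1" "0 \<le> 1 - d/4" using d by auto
  have "\<forall>r. 1 - d / 4 \<le> r \<and> r < 1 \<longrightarrow> v * (2 * \<delta>) \<le> integral {-pi..pi} (Jf W \<alpha> r)"
  proof (intro allI impI)
    fix r assume r: "1 - d / 4 \<le> r \<and> r < 1"
    have r0: "0 \<le> r" "r < 1" using r d by auto
    have "v * ((\<theta>0 + \<delta>) - (\<theta>0 - \<delta>)) \<le> integral {-pi..pi} (Jf W \<alpha> r)"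
    proof (rule int_lower)
      show "Jf W \<alpha> r integrable_on {-pi..pi}" by (rule Jf_integrable) (use r0 W in auto)
      show "continuous_on {-pi..pi} (Jf W \<alpha> r)" by (rule Jf_cont) (use r0 W in auto)
      show "\<forall>x\<in>{-pi..pi}. 0 \<le> Jf W \<alpha> r x" using Jf_nonneg by auto
      show "-pi \<le> \<theta>0 - \<delta>" "\<theta>0 - \<delta> \<le> \<theta>0 + \<delta>" "\<theta>0 + \<delta> \<le> pi"
        using t0 d pi_gt3 unfolding \<delta>_def by auto
      show "\<forall>x\<in>{\<theta>0 - \<delta>..\<theta>0 + \<delta>}. v \<le> Jf W \<alpha> r x"
      proof
        fix \<theta> assume th: "\<theta> \<in> {\<theta>0 - \<delta>..\<theta>0 + \<delta>}"
        have fac: "min ((d/2) powr \<alpha> w) (2 powr \<alpha> w) \<le> cmod (complex_of_real r * cis \<theta> - w) powr \<alpha> w"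
          if w: "w \<in> W" for w
        proof (rule powr_between(1))
          show "0 < d/2" using d by simp
          show "cmod (complex_of_real r * cis \<theta> - w) \<le> 2" by (rule circ_ub) (use r0 W w in auto)
          have "cmod (cis \<theta>0 - w) \<le> cmod (cis \<theta>0 - cis \<theta>) + cmod (cis \<theta> - complex_of_real r * cis \<theta>) + cmod (complex_of_real r * cis \<theta> - w)"
            using tri3[where a="cis \<theta>0" and b="cis \<theta>" and c=w] tri3[where a="cis \<theta>" and b="complex_of_real r * cis \<theta>" and c=w] by linarith
          moreover have "cmod (cis \<theta>0 - cis \<theta>) \<le> \<bar>\<theta>0 - \<theta>\<bar>" by (rule cmod_cis_diff_le)
          moreover have "cmod (cis \<theta> - complex_of_real r * cis \<theta>) = 1 - r" by (rule cis_sub_r) (use r0 in auto)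
          moreover have "\<bar>\<theta>0 - \<theta>\<bar> \<le> d/4"
          proof -
            have a: "\<theta>0 - d/4 \<le> \<theta>" "\<theta> \<le> \<theta>0 + d/4" using th unfolding \<delta>_def by auto
            have "\<theta>0 - \<theta> \<le> d/4" "-(\<theta>0 - \<theta>) \<le> d/4" using a by linarith+
            then show ?thesis by (simp only: abs_le_iff)
          qed
          moreover have "d \<le> cmod (cis \<theta>0 - w)" using d(3) w by auto
          ultimately show "d/2 \<le> cmod (complex_of_real r * cis \<theta> - w)" using r by linarith
        qed
        show "v \<le> Jf W \<alpha> r \<theta>" unfolding v_def Jf_def
          by (intro prod_mono) (use fac d in auto)
      qed
    qed
    then show "v * (2 * \<delta>) \<le> integral {-pi..pi} (Jf W \<alpha> r)" by simp
  qed
  then show ?thesis using c0 r00 by blast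
qed

lemma J_lower1:
  fixes W :: "complex set" and \<alpha> :: "complex \<Rightarrow> real"
  assumes W: "finite W" "\<forall>w\<in>W. cmod w = 1" and w0: "w0 \<in> W" and a0: "\<alpha> w0 < 0"
  shows "\<exists>c>0. \<exists>r0<1. 0 \<le> r0 \<and> (\<forall>r. r0 \<le> r \<and> r < 1 \<longrightarrow>
           c * (1 - r) powr (\<alpha> w0 + 1) \<le> integral {-pi..pi} (Jf W \<alpha> r))"
proof -
  define \<phi> where "\<phi> = Arg w0"
  have w1: "cmod w0 = 1" using W w0 by auto
  have w\<phi>: "cis \<phi> = w0"
  proof -
    have "w0 \<noteq> 0" using w1 by auto
    then show ?thesis using w1 cis_Arg[of w0] unfolding \<phi>_def by (simp add: sgn_div_norm)
  qed
  have \<phi>b: "-pi < \<phi>" "\<phi> \<le> pi" using Arg_bounded unfolding \<phi>_def by auto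
  obtain d where d: "0 < d" "d \<le> 1" "\<forall>w\<in>W - {w0}. d \<le> cmod (w0 - w)"
    using finite_pos_lb[of "W - {w0}" "\<lambda>w. cmod (w0 - w)"] W by auto
  define v where "v = (\<Prod>w\<in>W - {w0}. min ((d/2) powr \<alpha> w) (2 powr \<alpha> w))"
  have vpos: "0 < v" unfolding v_def using d by (intro prod_pos) auto
  define c where "c = v * 2 powr \<alpha> w0"
  have c0: "0 < c" unfolding c_def using vpos by simp
  have r00: "1 - d/4 < 1" "0 \<le> 1 - d/4" using d by auto
  have "\<forall>r. 1 - d / 4 \<le> r \<and> r < 1 \<longrightarrow> c * (1 - r) powr (\<alpha> w0 + 1) \<le> integral {-pi..pi} (Jf W \<alpha> r)"
  proof (intro allI impI)
    fix r assume r: "1 - d / 4 \<le> r \<and> r < 1"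
    have r0: "0 \<le> r" "r < 1" using r d by auto
    define h where "h = 1 - r"
    have h: "0 < h" "h \<le> d/4" using r unfolding h_def by auto
    obtain a b where ab: "-pi \<le> a" "b \<le> pi" "b - a = h" "\<forall>\<theta>\<in>{a..b}. \<bar>\<theta> - \<phi>\<bar> \<le> h"
    proof (cases "\<phi> \<le> 0")
      case True
      show ?thesis
      proof (rule that[of \<phi> "\<phi> + h"])
        show "\<forall>\<theta>\<in>{\<phi>..\<phi> + h}. \<bar>\<theta> - \<phi>\<bar> \<le> h" by auto
      qed (use True \<phi>b h d pi_gt3 in auto)
    next
      case False
      show ?thesis
      proof (rule that[of "\<phi> - h" \<phi>])
        show "\<forall>\<theta>\<in>{\<phi> - h..\<phi>}. \<bar>\<theta> - \<phi>\<bar> \<le> h" by auto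
      qed (use False \<phi>b h d pi_gt3 in auto)
    qed
    have "(v * (2*h) powr \<alpha> w0) * (b - a) \<le> integral {-pi..pi} (Jf W \<alpha> r)"
    proof (rule int_lower)
      show "Jf W \<alpha> r integrable_on {-pi..pi}" by (rule Jf_integrable) (use r0 W in auto)
      show "continuous_on {-pi..pi} (Jf W \<alpha> r)" by (rule Jf_cont) (use r0 W in auto)
      show "\<forall>x\<in>{-pi..pi}. 0 \<le> Jf W \<alpha> r x" using Jf_nonneg by auto
      show "-pi \<le> a" "a \<le> b" "b \<le> pi" using ab h by auto
      show "\<forall>x\<in>{a..b}. v * (2*h) powr \<alpha> w0 \<le> Jf W \<alpha> r x"
      proof
        fix \<theta> assume th: "\<theta> \<in> {a..b}"
        have near: "cmod (complex_of_real r * cis \<theta> - w0) \<le> 2 * h"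
        proof -
          have "cmod (complex_of_real r * cis \<theta> - w0) \<le> cmod (complex_of_real r * cis \<theta> - cis \<theta>) + cmod (cis \<theta> - cis \<phi>)"
            using tri3[where a="complex_of_real r * cis \<theta>" and b="cis \<theta>" and c="cis \<phi>"] w\<phi> by simp
          moreover have "cmod (complex_of_real r * cis \<theta> - cis \<theta>) = h"
            using cis_sub_r[of r \<theta>] r0 unfolding h_def by (simp add: norm_minus_commute)
          moreover have "cmod (cis \<theta> - cis \<phi>) \<le> h"
          proof -
            have "\<bar>\<theta> - \<phi>\<bar> \<le> h" using ab(4) th by blast
            then show ?thesis using cmod_cis_diff_le[of \<theta> \<phi>] by linarith
          qed
          ultimately show ?thesis by linarith
        qed
        have pos0: "h \<le> cmod (complex_of_real r * cis \<theta> - w0)"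
          unfolding h_def by (rule circ_lb) (use r0 w1 in auto)
        have f0: "(2*h) powr \<alpha> w0 \<le> cmod (complex_of_real r * cis \<theta> - w0) powr \<alpha> w0"
          by (rule powr_mono2') (use a0 near pos0 h in auto)
        have fac: "min ((d/2) powr \<alpha> w) (2 powr \<alpha> w) \<le> cmod (complex_of_real r * cis \<theta> - w) powr \<alpha> w"
          if w: "w \<in> W - {w0}" for w
        proof (rule powr_between(1))
          show "0 < d/2" using d by simp
          show "cmod (complex_of_real r * cis \<theta> - w) \<le> 2" by (rule circ_ub) (use r0 W w in auto)
          have "cmod (w0 - w) \<le> cmod (w0 - complex_of_real r * cis \<theta>) + cmod (complex_of_real r * cis \<theta> - w)"
            by (rule tri3)
          moreover have "d \<le> cmod (w0 - w)" using d(3) w by auto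
          moreover have "cmod (w0 - complex_of_real r * cis \<theta>) \<le> 2 * h" using near by (simp add: norm_minus_commute)
          moreover have "2 * h \<le> d / 2" using h by simp
          ultimately show "d/2 \<le> cmod (complex_of_real r * cis \<theta> - w)" by linarith
        qed
        have pv: "v \<le> (\<Prod>w\<in>W - {w0}. cmod (complex_of_real r * cis \<theta> - w) powr \<alpha> w)"
          unfolding v_def by (intro prod_mono) (use fac d in auto)
        have "Jf W \<alpha> r \<theta> = cmod (complex_of_real r * cis \<theta> - w0) powr \<alpha> w0 *
                 (\<Prod>w\<in>W - {w0}. cmod (complex_of_real r * cis \<theta> - w) powr \<alpha> w)"
          unfolding Jf_def using prod.remove[OF W(1) w0] by simp
        moreover have "(2*h) powr \<alpha> w0 * v \<le> cmod (complex_of_real r * cis \<theta> - w0) powr \<alpha> w0 *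
                 (\<Prod>w\<in>W - {w0}. cmod (complex_of_real r * cis \<theta> - w) powr \<alpha> w)"
          by (rule mult_mono[OF f0 pv]) (use vpos in auto)
        ultimately show "v * (2*h) powr \<alpha> w0 \<le> Jf W \<alpha> r \<theta>" by (simp add: mult.commute)
      qed
    qed
    moreover have "(v * (2*h) powr \<alpha> w0) * (b - a) = c * h powr (\<alpha> w0 + 1)"
      unfolding c_def using h ab(3) by (simp add: powr_mult powr_add)
    ultimately show "c * (1 - r) powr (\<alpha> w0 + 1) \<le> integral {-pi..pi} (Jf W \<alpha> r)"
      unfolding h_def by simp
  qed
  then show ?thesis using c0 r00 by blast
qed

lemma log_bounds:
  fixes F c C h \<beta> e :: real
  assumes "0 < c" "0 < C" "0 < h" "h < 1"
    and "c * h powr (-\<beta>) \<le> F" "F \<le> C * h powr (-\<beta> - e)"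
  shows "\<beta> + ln c / (- ln h) \<le> ln F / (- ln h)" "ln F / (- ln h) \<le> \<beta> + e + ln C / (- ln h)"
proof -
  define L where "L = - ln h"
  have lnh: "ln h = - L" unfolding L_def by simp
  have L: "0 < L" using assms unfolding L_def by simp
  have p1: "0 < c * h powr (-\<beta>)" using assms by simp
  have Fp: "0 < F" using p1 assms by linarith
  have "ln (c * h powr (-\<beta>)) \<le> ln F" using p1 Fp assms by simp
  then have "ln c + \<beta> * L \<le> ln F" using assms by (simp add: ln_mult lnh)
  then have "(ln c + \<beta> * L) / L \<le> ln F / L" using L by (intro divide_right_mono) auto
  moreover have "(ln c + \<beta> * L) / L = \<beta> + ln c / L" using L by (simp add: add_divide_distrib)
  ultimately show "\<beta> + ln c / (- ln h) \<le> ln F / (- ln h)" unfolding L_def[symmetric] by simp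
  have p2: "0 < C * h powr (-\<beta> - e)" using assms by simp
  have "ln F \<le> ln (C * h powr (-\<beta> - e))" using p2 Fp assms by simp
  then have "ln F \<le> ln C + (\<beta> + e) * L" using assms by (simp add: ln_mult lnh algebra_simps)
  then have "ln F / L \<le> (ln C + (\<beta> + e) * L) / L" using L by (intro divide_right_mono) auto
  moreover have "(ln C + (\<beta> + e) * L) / L = \<beta> + e + ln C / L" using L by (simp add: add_divide_distrib)
  ultimately show "ln F / (- ln h) \<le> \<beta> + e + ln C / (- ln h)" unfolding L_def[symmetric] by simp
qed

lemma limit_from_bounds:
  fixes f :: "real \<Rightarrow> real" and \<beta> :: real
  assumes lower: "\<exists>c>0. \<exists>r0<1. \<forall>r. r0 \<le> r \<and> r < 1 \<longrightarrow> c * (1 - r) powr (-\<beta>) \<le> f r"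
    and upper: "\<forall>e. 0 < e \<and> e < 1 \<longrightarrow> (\<exists>C. \<exists>r0<1. \<forall>r. r0 \<le> r \<and> r < 1 \<longrightarrow> f r \<le> C * (1 - r) powr (-\<beta> - e))"
  shows "((\<lambda>r. ln (f r) / \<bar>ln (1 - r)\<bar>) \<longlongrightarrow> \<beta>) (at_left 1)"
proof (rule tendstoI)
  fix \<eta> :: real assume \<eta>: "0 < \<eta>"
  define e where "e = min (\<eta>/2) (1/2)"
  have e: "0 < e" "e < 1" "e \<le> \<eta>/2" using \<eta> unfolding e_def by auto
  obtain c r1 where c: "0 < c" "r1 < 1" "\<forall>r. r1 \<le> r \<and> r < 1 \<longrightarrow> c * (1 - r) powr (-\<beta>) \<le> f r"
    using lower by blast
  obtain C0 r2 where C0: "r2 < 1" "\<forall>r. r2 \<le> r \<and> r < 1 \<longrightarrow> f r \<le> C0 * (1 - r) powr (-\<beta> - e)"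
    using upper e by blast
  define C where "C = max C0 1"
  have C: "0 < C" "\<forall>r. r2 \<le> r \<and> r < 1 \<longrightarrow> f r \<le> C * (1 - r) powr (-\<beta> - e)"
  proof -
    show "0 < C" unfolding C_def by simp
    show "\<forall>r. r2 \<le> r \<and> r < 1 \<longrightarrow> f r \<le> C * (1 - r) powr (-\<beta> - e)"
    proof (intro allI impI)
      fix r assume r: "r2 \<le> r \<and> r < 1"
      have "C0 * (1 - r) powr (-\<beta> - e) \<le> C * (1 - r) powr (-\<beta> - e)"
        unfolding C_def by (intro mult_right_mono) auto
      moreover have "f r \<le> C0 * (1 - r) powr (-\<beta> - e)" using C0(2) r by blast
      ultimately show "f r \<le> C * (1 - r) powr (-\<beta> - e)" by linarith
    qed
  qed
  define M where "M = 2 * max \<bar>ln c\<bar> \<bar>ln C\<bar> / \<eta> + 1"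
  have M: "0 < M"
  proof -
    have "0 \<le> 2 * max \<bar>ln c\<bar> \<bar>ln C\<bar> / \<eta>" using \<eta> by simp
    then show ?thesis unfolding M_def by linarith
  qed
  define r0 where "r0 = max (max r1 r2) (max 0 (1 - exp (- M)))"
  have r0: "r0 < 1" unfolding r0_def using c C0 by auto
  have "eventually (\<lambda>r. r \<in> {r0<..<1}) (at_left (1::real))"
    by (rule eventually_at_left_real[OF r0])
  then show "eventually (\<lambda>r. dist (ln (f r) / \<bar>ln (1 - r)\<bar>) \<beta> < \<eta>) (at_left 1)"
  proof (rule eventually_mono)
    fix r assume r: "r \<in> {r0<..<1}"
    define h where "h = 1 - r"
    have h: "0 < h" "h < 1" using r unfolding h_def r0_def by auto
    define L where "L = - ln h"
    have habs: "\<bar>ln (1 - r)\<bar> = L" using h unfolding h_def L_def by simp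
    have "h < exp (- M)" using r unfolding h_def r0_def by auto
    then have "ln h < - M" using h by (metis ln_exp ln_less_cancel_iff exp_gt_zero)
    then have LM: "M < L" unfolding L_def by simp
    have L: "0 < L" using M LM by linarith
    have lb: "c * h powr (-\<beta>) \<le> f r" using c(3) r unfolding h_def r0_def by auto
    have ub: "f r \<le> C * h powr (-\<beta> - e)" using C(2) r unfolding h_def r0_def by auto
    note B = log_bounds[OF c(1) C(1) h lb ub, folded L_def]
    have small: "\<bar>x\<bar> / L < \<eta> / 2" if "\<bar>x\<bar> \<le> max \<bar>ln c\<bar> \<bar>ln C\<bar>" for x
    proof -
      have "\<bar>x\<bar> \<le> (M - 1) * \<eta> / 2" unfolding M_def using that \<eta> by simp
      also have "\<dots> < L * \<eta> / 2"
      proof -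
        have "(M - 1) * \<eta> < L * \<eta>" using LM \<eta> by (intro mult_strict_right_mono) auto
        then show ?thesis by (simp add: divide_strict_right_mono)
      qed
      finally have "\<bar>x\<bar> < L * \<eta> / 2" .
      then have "\<bar>x\<bar> / L < (L * \<eta> / 2) / L" using L by (intro divide_strict_right_mono) auto
      also have "(L * \<eta> / 2) / L = \<eta> / 2" using L by simp
      finally show ?thesis .
    qed
    have s1: "\<bar>ln c\<bar> / L < \<eta> / 2" by (rule small) simp
    have s2: "\<bar>ln C\<bar> / L < \<eta> / 2" by (rule small) simp
    have a1: "- (\<bar>ln c\<bar> / L) \<le> ln c / L"
    proof -
      have "- \<bar>ln c\<bar> \<le> ln c" by simp
      then have "(- \<bar>ln c\<bar>) / L \<le> ln c / L" using L by (intro divide_right_mono) auto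
      then show ?thesis by simp
    qed
    have a2: "ln C / L \<le> \<bar>ln C\<bar> / L"
      using L by (intro divide_right_mono) auto
    have "\<bar>ln (f r) / L - \<beta>\<bar> < \<eta>"
      using B a1 a2 s1 s2 e by (simp only: abs_less_iff) linarith
    then show "dist (ln (f r) / \<bar>ln (1 - r)\<bar>) \<beta> < \<eta>"
      unfolding habs dist_real_def .
  qed
qed

lemma Limsup_from_bounds:
  fixes f :: "real \<Rightarrow> real" and \<beta> :: real
  assumes lower: "\<exists>c>0. \<exists>r0<1. \<forall>r. r0 \<le> r \<and> r < 1 \<longrightarrow> c * (1 - r) powr (-\<beta>) \<le> f r"
    and upper: "\<forall>e. 0 < e \<and> e < 1 \<longrightarrow> (\<exists>C. \<exists>r0<1. \<forall>r. r0 \<le> r \<and> r < 1 \<longrightarrow> f r \<le> C * (1 - r) powr (-\<beta> - e))"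
  shows "Limsup (at_left (1::real)) (\<lambda>r. ereal (ln (f r) / \<bar>ln (1 - r)\<bar>)) = ereal \<beta>"
  by (rule lim_imp_Limsup) (use limit_from_bounds[OF lower upper] in auto)

lemma unif_bounds:
  fixes G :: "complex \<Rightarrow> real"
  assumes loc: "\<And>u. cmod u = 1 \<Longrightarrow> \<exists>L>0. (G \<longlongrightarrow> L) (at u)"
  shows "\<exists>r1<1. \<exists>c>0. \<exists>C. \<forall>z. r1 < cmod z \<and> cmod z < 1 \<longrightarrow> c \<le> G z \<and> G z \<le> C"
proof (rule ccontr)
  assume H: "\<not> ?thesis"
  have "\<forall>n::nat. \<exists>z. 1 - 1 / (real n + 1) < cmod z \<and> cmod z < 1 \<and>
           \<not> (1 / (real n + 1) \<le> G z \<and> G z \<le> real n + 1)"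
  proof
    fix n :: nat
    have a: "1 - 1 / (real n + 1) < 1" by simp
    have b: "0 < 1 / (real n + 1)" by simp
    show "\<exists>z. 1 - 1 / (real n + 1) < cmod z \<and> cmod z < 1 \<and>
           \<not> (1 / (real n + 1) \<le> G z \<and> G z \<le> real n + 1)"
      using H a b by blast
  qed
  then obtain z where z: "\<And>n. 1 - 1 / (real n + 1) < cmod (z n)" "\<And>n. cmod (z n) < 1"
    "\<And>n. \<not> (1 / (real n + 1) \<le> G (z n) \<and> G (z n) \<le> real n + 1)"
    by metis
  have "seq_compact (cball (0::complex) 1)" by (rule compact_imp_seq_compact) simp
  moreover have "\<forall>n. z n \<in> cball 0 1" using z(2) by (simp add: less_imp_le)
  ultimately obtain l \<sigma> where l: "l \<in> cball 0 1" "strict_mono \<sigma>" "(z \<circ> \<sigma>) \<longlonglongrightarrow> l"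
    by (rule seq_compactE)
  have nl: "(\<lambda>n. cmod (z (\<sigma> n))) \<longlonglongrightarrow> cmod l"
    using tendsto_norm[OF l(3)] by (simp add: o_def)
  have top0: "filterlim (\<lambda>n. real (\<sigma> n)) at_top sequentially"
    by (rule filterlim_compose[OF filterlim_real_sequentially filterlim_subseq[OF l(2)]])
  have top1: "filterlim (\<lambda>n. real (\<sigma> n) + 1) at_top sequentially"
    using filterlim_tendsto_add_at_top[OF tendsto_const[of 1] top0] by (simp add: add.commute)
  have inv0: "(\<lambda>n. 1 / (real (\<sigma> n) + 1)) \<longlonglongrightarrow> 0"
  proof -
    have "filterlim (\<lambda>n. real (\<sigma> n) + 1) at_top sequentially"
      using top1 .
    then show ?thesis by (intro tendsto_divide_0[OF tendsto_const] filterlim_at_top_imp_at_infinity)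
  qed
  have n1: "(\<lambda>n. cmod (z (\<sigma> n))) \<longlonglongrightarrow> 1"
  proof (rule tendsto_sandwich[of "\<lambda>n. 1 - 1 / (real (\<sigma> n) + 1)" _ _ "\<lambda>n. 1"])
    show "\<forall>\<^sub>F n in sequentially. 1 - 1 / (real (\<sigma> n) + 1) \<le> cmod (z (\<sigma> n))"
      using z(1) by (intro always_eventually allI less_imp_le)
    show "\<forall>\<^sub>F n in sequentially. cmod (z (\<sigma> n)) \<le> 1"
      using z(2) by (intro always_eventually allI less_imp_le)
    show "(\<lambda>n. 1 - 1 / (real (\<sigma> n) + 1)) \<longlonglongrightarrow> 1"
      using tendsto_diff[OF tendsto_const inv0, of 1] by simp
  qed simp
  have l1: "cmod l = 1" using LIMSEQ_unique[OF nl n1] .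
  obtain L where L: "L > 0" "(G \<longlongrightarrow> L) (at l)" using loc[OF l1] by blast
  have zat: "filterlim (z \<circ> \<sigma>) (at l) sequentially"
  proof -
    have "\<forall>n. (z \<circ> \<sigma>) n \<in> UNIV \<and> (z \<circ> \<sigma>) n \<noteq> l"
    proof
      fix n show "(z \<circ> \<sigma>) n \<in> UNIV \<and> (z \<circ> \<sigma>) n \<noteq> l"
        using z(2)[of "\<sigma> n"] l1 by auto
    qed
    then show ?thesis unfolding filterlim_at using l(3) by (auto intro: always_eventually)
  qed
  have GL: "(\<lambda>n. G (z (\<sigma> n))) \<longlonglongrightarrow> L"
    using filterlim_compose[OF L(2) zat] by (simp add: o_def)
  have ev1: "eventually (\<lambda>n. L/2 < G (z (\<sigma> n)) \<and> G (z (\<sigma> n)) < 2 * L) sequentially"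
  proof -
    have "eventually (\<lambda>n. dist (G (z (\<sigma> n))) L < L/2) sequentially"
      using tendstoD[OF GL, of "L/2"] L by simp
    then show ?thesis
    proof (rule eventually_mono)
      fix n assume "dist (G (z (\<sigma> n))) L < L / 2"
      then have "G (z (\<sigma> n)) - L < L/2" "L - G (z (\<sigma> n)) < L/2"
        unfolding dist_real_def by linarith+
      then show "L/2 < G (z (\<sigma> n)) \<and> G (z (\<sigma> n)) < 2 * L" using L by linarith
    qed
  qed
  have ev2: "eventually (\<lambda>n. 1 / (real (\<sigma> n) + 1) < L/2) sequentially"
    using tendstoD[OF inv0, of "L/2"] L by (auto simp: dist_real_def elim!: eventually_mono)
  have ev3: "eventually (\<lambda>n. 2 * L < real (\<sigma> n) + 1) sequentially"
  proof -
    have "filterlim (\<lambda>n. real (\<sigma> n) + 1) at_top sequentially"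
      using top1 .
    then show ?thesis by (simp add: filterlim_at_top_dense)
  qed
  obtain n where "L/2 < G (z (\<sigma> n)) \<and> G (z (\<sigma> n)) < 2 * L" "1 / (real (\<sigma> n) + 1) < L/2"
    "2 * L < real (\<sigma> n) + 1"
    using eventually_happens'[OF sequentially_bot, OF eventually_conj[OF ev1 eventually_conj[OF ev2 ev3]]] by blast
  then show False using z(3)[of "\<sigma> n"] by linarith
qed

definition Nf :: "complex poly \<Rightarrow> complex poly \<Rightarrow> complex poly" where
  "Nf p q = pderiv p * q - p * pderiv q"

definition Df :: "complex poly \<Rightarrow> complex poly \<Rightarrow> complex \<Rightarrow> complex" where
  "Df p q z = poly (Nf p q) z / (poly q z)^2"

lemma deriv_ratfun_eq:
  assumes "poly q z \<noteq> 0"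
  shows "deriv (ratfun p q) z = Df p q z"
proof -
  have "((\<lambda>z. poly p z / poly q z) has_field_derivative
      (poly (pderiv p) z * poly q z - poly p z * poly (pderiv q) z) / (poly q z * poly q z)) (at z)"
    by (rule DERIV_divide[OF poly_DERIV poly_DERIV assms])
  then have "deriv (\<lambda>z. poly p z / poly q z) z = (poly (pderiv p) z * poly q z - poly p z * poly (pderiv q) z) / (poly q z * poly q z)"
    by (rule DERIV_imp_deriv)
  then show ?thesis unfolding ratfun_def Df_def Nf_def by (simp add: power2_eq_square)
qed

lemma Df_cont:
  assumes "poly q u \<noteq> 0"
  shows "isCont (Df p q) u"
proof -
  have "isCont (\<lambda>z. poly (Nf p q) z / (poly q z)^2) u"
    using assms by (intro continuous_intros) auto
  then show ?thesis unfolding Df_def[abs_def] .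
qed

lemma eventually_poly_nonzero:
  fixes r :: "complex poly"
  assumes "poly r u \<noteq> 0"
  shows "eventually (\<lambda>z. poly r z \<noteq> 0) (at u)"
proof -
  have "(poly r \<longlongrightarrow> poly r u) (at u)" using poly_isCont[where p=r and x=u] unfolding isCont_def .
  then show ?thesis using tendsto_imp_eventually_ne assms by blast
qed

lemma pole_identity:
  assumes "q = [:-u,1:]^e * q1" "1 \<le> e"
  shows "poly (Nf p q) z * (z - u) =
    (z - u)^e * ((z - u) * (poly (pderiv p) z * poly q1 z - poly p z * poly (pderiv q1) z) - of_nat e * (poly p z * poly q1 z))"
proof -
  obtain e' where e: "e = Suc e'" using assms(2) by (cases e) auto
  have d: "pderiv [:-u, 1:] = 1" by (simp add: pderiv_pCons)
  have pq: "poly (pderiv q) z = of_nat e * (z - u)^e' * poly q1 z + (z - u)^e * poly (pderiv q1) z"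
    unfolding assms(1) e pderiv_mult pderiv_power_Suc d by (simp del: power_Suc)
  have qz: "poly q z = (z - u)^e * poly q1 z" unfolding assms(1) by simp
  have "poly (Nf p q) z = poly (pderiv p) z * poly q z - poly p z * poly (pderiv q) z"
    unfolding Nf_def by simp
  also have "\<dots> = poly (pderiv p) z * ((z - u)^e * poly q1 z) - poly p z * (of_nat e * (z - u)^e' * poly q1 z + (z - u)^e * poly (pderiv q1) z)"
    unfolding pq qz ..
  finally have eq: "poly (Nf p q) z = poly (pderiv p) z * ((z - u)^e * poly q1 z) - poly p z * (of_nat e * (z - u)^e' * poly q1 z + (z - u)^e * poly (pderiv q1) z)" .
  show ?thesis unfolding eq unfolding e by (simp add: algebra_simps)
qed

lemma pole_limit:
  assumes q: "q = [:-u,1:]^e * q1" and q1u: "poly q1 u \<noteq> 0" and e: "1 \<le> e" and pu: "poly p u \<noteq> 0"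
  shows "((\<lambda>z. cmod (Df p q z) / cmod (z - u) powr (- (real e + 1))) \<longlongrightarrow>
            real e * cmod (poly p u) / cmod (poly q1 u)) (at u)"
proof -
  define \<Psi> where "\<Psi> = (\<lambda>z. (z - u) * (poly (pderiv p) z * poly q1 z - poly p z * poly (pderiv q1) z) - of_nat e * (poly p z * poly q1 z))"
  define \<Phi> where "\<Phi> = (\<lambda>z. \<Psi> z / (poly q1 z)^2)"
  have cont: "isCont \<Phi> u" unfolding \<Phi>_def \<Psi>_def using q1u by (intro continuous_intros) auto
  have val: "cmod (\<Phi> u) = real e * cmod (poly p u) / cmod (poly q1 u)"
    unfolding \<Phi>_def \<Psi>_def using q1u by (simp add: norm_mult norm_divide power2_eq_square)
  have lim: "((\<lambda>z. cmod (\<Phi> z)) \<longlongrightarrow> cmod (\<Phi> u)) (at u)"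
    using cont unfolding isCont_def by (intro tendsto_norm)
  have ev: "eventually (\<lambda>z. z \<noteq> u \<and> poly q1 z \<noteq> 0) (at u)"
    using eventually_poly_nonzero[OF q1u] eventually_at_topological by (auto elim: eventually_mono simp: eventually_conj_iff eventually_at_filter)
  have eq: "cmod (Df p q z) / cmod (z - u) powr (- (real e + 1)) = cmod (\<Phi> z)"
    if z: "z \<noteq> u \<and> poly q1 z \<noteq> 0" for z
  proof -
    have zu: "z - u \<noteq> 0" using z by auto
    have pos: "0 < cmod (z - u)" using zu by simp
    have pw: "cmod (z - u) powr (- (real e + 1)) = inverse (cmod (z - u) ^ (e + 1))"
    proof -
      have a: "cmod (z - u) powr real (e + 1) = cmod (z - u) ^ (e + 1)" by (rule powr_realpow[OF pos])
      have b: "- (real e + 1) = - real (e + 1)" by simp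
      show ?thesis unfolding b powr_minus a ..
    qed
    have id: "poly (Nf p q) z * (z - u) = (z - u)^e * \<Psi> z"
      unfolding \<Psi>_def by (rule pole_identity[OF q e])
    have qz: "poly q z = (z - u)^e * poly q1 z" unfolding q by simp
    have "Df p q z * (z - u)^(e+1) = \<Phi> z"
    proof -
      have "Df p q z * (z - u)^(e+1) = (poly (Nf p q) z * (z - u)) * (z - u)^e / ((z - u)^e * poly q1 z)^2"
        unfolding Df_def qz by (simp add: algebra_simps)
      also have "\<dots> = ((z - u)^e * \<Psi> z) * (z - u)^e / ((z - u)^e * poly q1 z)^2" unfolding id ..
      also have "\<dots> = \<Phi> z" unfolding \<Phi>_def using zu z by (simp add: field_simps power2_eq_square)
      finally show ?thesis .
    qed
    then have "cmod (Df p q z) * cmod (z - u) ^ (e + 1) = cmod (\<Phi> z)"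
      by (metis norm_mult norm_power)
    then show ?thesis unfolding pw by (simp add: divide_inverse)
  qed
  show ?thesis
    by (rule Lim_transform_eventually[OF lim[unfolded val]])
       (use ev eq in \<open>auto elim!: eventually_mono\<close>)
qed

lemma B_nonzero:
  fixes A B :: "complex poly"
  assumes cop: "coprime ((\<Prod>z\<in>Z. [:-z,1:]) * A) B" and Z: "finite Z" "u \<in> Z"
  shows "poly B u \<noteq> 0"
proof
  assume B0: "poly B u = 0"
  have d1: "[:-u,1:] dvd (\<Prod>z\<in>Z. [:-z,1:]) * A"
    by (rule dvd_mult2, rule dvd_prodI[OF Z])
  have d2: "[:-u,1:] dvd B" using B0 by (simp add: poly_eq_0_iff_dvd)
  have "is_unit [:-u, 1:]" by (rule coprime_common_divisor[OF cop d1 d2])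
  moreover have nz: "[:-u, 1:] \<noteq> (0 :: complex poly)" by simp
  ultimately have "degree [:-u, 1:] = 0" using is_unit_iff_degree[OF nz] by blast
  then show False by simp
qed

lemma poly_lin_prod: "poly (\<Prod>z\<in>Z. [:-z,1:]) (x::complex) = (\<Prod>z\<in>Z. x - z)"
  unfolding poly_prod by (intro prod.cong refl) simp

lemma crit_limit:
  fixes A B :: "complex poly"
  assumes eqn: "(\<Prod>z\<in>Z. [:-z,1:]) * A * q^2 = Nf p q * B"
    and Z: "finite Z" "u \<in> Z" and qu: "poly q u \<noteq> 0" and Bu: "poly B u \<noteq> 0"
  shows "((\<lambda>z. cmod (Df p q z) / cmod (z - u) powr 1) \<longlongrightarrow>
           cmod ((\<Prod>zi\<in>Z - {u}. u - zi) * poly A u / poly B u)) (at u)"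
proof -
  define \<Theta> where "\<Theta> = (\<lambda>z. (\<Prod>zi\<in>Z - {u}. z - zi) * poly A z / poly B z)"
  have cont: "isCont \<Theta> u" unfolding \<Theta>_def using Bu by (intro continuous_intros) auto
  have lim: "((\<lambda>z. cmod (\<Theta> z)) \<longlongrightarrow> cmod (\<Theta> u)) (at u)"
    using cont unfolding isCont_def by (intro tendsto_norm)
  have ev: "eventually (\<lambda>z. z \<noteq> u \<and> poly q z \<noteq> 0 \<and> poly B z \<noteq> 0) (at u)"
    using eventually_poly_nonzero[OF qu] eventually_poly_nonzero[OF Bu]
    by (auto simp: eventually_conj_iff eventually_at_filter elim: eventually_mono)
  have eq: "cmod (Df p q z) / cmod (z - u) powr 1 = cmod (\<Theta> z)"
    if z: "z \<noteq> u \<and> poly q z \<noteq> 0 \<and> poly B z \<noteq> 0" for z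
  proof -
    have e1: "(\<Prod>zi\<in>Z. z - zi) * poly A z * (poly q z)^2 = poly (Nf p q) z * poly B z"
      using arg_cong[OF eqn, of "\<lambda>P. poly P z"] by (simp add: poly_lin_prod)
    have e2: "(\<Prod>zi\<in>Z. z - zi) = (z - u) * (\<Prod>zi\<in>Z - {u}. z - zi)"
      using prod.remove[OF Z] by simp
    have "Df p q z = (\<Prod>zi\<in>Z. z - zi) * poly A z / poly B z"
      unfolding Df_def using e1 z by (simp add: field_simps)
    also have "\<dots> = (z - u) * \<Theta> z" unfolding e2 \<Theta>_def by simp
    finally have "Df p q z = (z - u) * \<Theta> z" .
    then show ?thesis using z by (simp add: norm_mult)
  qed
  show ?thesis
    by (rule Lim_transform_eventually[OF lim[unfolded \<Theta>_def]])
       (use ev eq in \<open>auto elim!: eventually_mono simp: \<Theta>_def\<close>)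
qed

lemma coprime_root:
  fixes p q :: "complex poly"
  assumes "coprime p q" "poly q u = 0"
  shows "poly p u \<noteq> 0"
proof
  assume "poly p u = 0"
  then have d1: "[:-u,1:] dvd p" by (simp add: poly_eq_0_iff_dvd)
  have d2: "[:-u,1:] dvd q" using assms(2) by (simp add: poly_eq_0_iff_dvd)
  have "is_unit [:-u, 1:]" by (rule coprime_common_divisor[OF assms(1) d1 d2])
  moreover have nz: "[:-u, 1:] \<noteq> (0 :: complex poly)" by simp
  ultimately have "degree [:-u, 1:] = 0" using is_unit_iff_degree[OF nz] by blast
  then show False by simp
qed

lemma prod_dist_cont:
  fixes S :: "complex set" and k :: "complex \<Rightarrow> real"
  assumes "finite S" "u \<notin> S"
  shows "((\<lambda>z. \<Prod>w\<in>S. cmod (z - w) powr k w) \<longlongrightarrow> (\<Prod>w\<in>S. cmod (u - w) powr k w)) (at u)"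
    and "0 < (\<Prod>w\<in>S. cmod (u - w) powr k w)"
proof -
  show "((\<lambda>z. \<Prod>w\<in>S. cmod (z - w) powr k w) \<longlongrightarrow> (\<Prod>w\<in>S. cmod (u - w) powr k w)) (at u)"
  proof (rule tendsto_prod)
    fix w assume w: "w \<in> S"
    then have "u - w \<noteq> 0" using assms by auto
    then show "((\<lambda>z. cmod (z - w) powr k w) \<longlongrightarrow> cmod (u - w) powr k w) (at u)"
      by (intro tendsto_intros) auto
  qed
  show "0 < (\<Prod>w\<in>S. cmod (u - w) powr k w)"
    using assms by (intro prod_pos) auto
qed

lemma G_local_in:
  fixes W :: "complex set" and k :: "complex \<Rightarrow> real" and F :: "complex \<Rightarrow> real"
  assumes W: "finite W" "u \<in> W" and lim: "((\<lambda>z. F z / cmod (z - u) powr k u) \<longlongrightarrow> L) (at u)" and L: "0 < L"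
  shows "\<exists>L'>0. ((\<lambda>z. F z / (\<Prod>w\<in>W. cmod (z - w) powr k w)) \<longlongrightarrow> L') (at u)"
proof -
  have fin: "finite (W - {u})" "u \<notin> W - {u}" using W by auto
  note pc = prod_dist_cont[OF fin, of k]
  have eq: "F z / (\<Prod>w\<in>W. cmod (z - w) powr k w) =
      (F z / cmod (z - u) powr k u) / (\<Prod>w\<in>W - {u}. cmod (z - w) powr k w)" for z
    using prod.remove[OF W, of "\<lambda>w. cmod (z - w) powr k w"] by simp
  have "((\<lambda>z. (F z / cmod (z - u) powr k u) / (\<Prod>w\<in>W - {u}. cmod (z - w) powr k w)) \<longlongrightarrow>
       L / (\<Prod>w\<in>W - {u}. cmod (u - w) powr k w)) (at u)"
    by (rule tendsto_divide[OF lim pc(1)]) (use pc(2) in auto)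
  moreover have "0 < L / (\<Prod>w\<in>W - {u}. cmod (u - w) powr k w)" using L pc(2) by simp
  ultimately show ?thesis unfolding eq by blast
qed

lemma G_local_out:
  fixes W :: "complex set" and k :: "complex \<Rightarrow> real" and F :: "complex \<Rightarrow> real"
  assumes W: "finite W" "u \<notin> W" and lim: "(F \<longlongrightarrow> L) (at u)" and L: "0 < L"
  shows "\<exists>L'>0. ((\<lambda>z. F z / (\<Prod>w\<in>W. cmod (z - w) powr k w)) \<longlongrightarrow> L') (at u)"
proof -
  note pc = prod_dist_cont[OF W, of k]
  have "((\<lambda>z. F z / (\<Prod>w\<in>W. cmod (z - w) powr k w)) \<longlongrightarrow>
       L / (\<Prod>w\<in>W. cmod (u - w) powr k w)) (at u)"
    by (rule tendsto_divide[OF lim pc(1)]) (use pc(2) in auto)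
  moreover have "0 < L / (\<Prod>w\<in>W. cmod (u - w) powr k w)" using L pc(2) by simp
  ultimately show ?thesis by blast
qed

lemma cis_path_cont:
  assumes "\<And>x. poly q (complex_of_real r * cis x) \<noteq> 0"
  shows "continuous_on S (\<lambda>\<theta>. Df p q (complex_of_real r * cis \<theta>))"
proof (rule continuous_at_imp_continuous_on, rule ballI)
  fix x
  have "continuous_on UNIV (\<lambda>\<theta>. complex_of_real r * cis \<theta>)" by (intro continuous_intros)
  then have "isCont (\<lambda>\<theta>. complex_of_real r * cis \<theta>) x"
    using continuous_on_eq_continuous_at[OF open_UNIV] by blast
  moreover have "isCont (Df p q) (complex_of_real r * cis x)" by (rule Df_cont[OF assms])
  ultimately show "isCont (\<lambda>\<theta>. Df p q (complex_of_real r * cis \<theta>)) x" by (rule isCont_o2)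
qed

lemma core:
  fixes p q A B :: "complex poly" and P :: "complex set" and e :: "complex \<Rightarrow> nat" and \<tau> :: real
  assumes R: "classR p q"
    and Zfin: "finite (crit_T p q)"
    and eqn: "(\<Prod>z\<in>crit_T p q. [:-z, 1:]) * A * q ^ 2 = (pderiv p * q - p * pderiv q) * B"
    and cop: "coprime ((\<Prod>z\<in>crit_T p q. [:-z, 1:]) * A) B"
    and Anz: "\<forall>z. cmod z = 1 \<longrightarrow> poly A z \<noteq> 0"
    and Pfin: "finite P" and Pdef: "\<forall>u. u \<in> P \<longleftrightarrow> cmod u = 1 \<and> poly q u = 0"
    and Pord: "\<forall>u\<in>P. 1 \<le> e u \<and> (\<exists>q1. q = [:-u, 1:] ^ (e u) * q1 \<and> poly q1 u \<noteq> 0)"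
  shows "beta_tilde p q \<tau> = ereal (Max (insert 0 ((\<lambda>w. - ((if w \<in> P then - (real (e w) + 1) else 1) * \<tau>) - 1) ` (crit_T p q \<union> P))))"
proof -
  define Z where "Z = crit_T p q"
  define W where "W = Z \<union> P"
  define k where "k = (\<lambda>w. if w \<in> P then - (real (e w) + 1) else (1::real))"
  define \<alpha> where "\<alpha> = (\<lambda>w. k w * \<tau>)"
  define \<beta> where "\<beta> = Max (insert 0 ((\<lambda>w. - \<alpha> w - 1) ` W))"
  have Wfin: "finite W" unfolding W_def Z_def using Zfin Pfin by auto
  have Zsph: "\<forall>w\<in>Z. cmod w = 1 \<and> poly q w \<noteq> 0 \<and> deriv (ratfun p q) w = 0"
    unfolding Z_def crit_T_def by auto
  have Wsph: "\<forall>w\<in>W. cmod w = 1" unfolding W_def using Zsph Pdef by auto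
  have ZP: "Z \<inter> P = {}" using Zsph Pdef by auto
  have qdisk: "\<And>z. cmod z < 1 \<Longrightarrow> poly q z \<noteq> 0" using R unfolding classR_def by auto
  have pqcop: "coprime p q" using R unfolding classR_def by auto
  have eqn': "(\<Prod>z\<in>Z. [:-z, 1:]) * A * q ^ 2 = Nf p q * B" using eqn unfolding Z_def Nf_def .
  define G where "G = (\<lambda>z. cmod (Df p q z) / (\<Prod>w\<in>W. cmod (z - w) powr k w))"
  have loc: "\<exists>L>0. (G \<longlongrightarrow> L) (at u)" if u: "cmod u = 1" for u
  proof -
    consider "u \<in> P" | "u \<in> Z" | "u \<notin> W" unfolding W_def by auto
    then show ?thesis
    proof cases
      case 1
      obtain q1 where q1: "q = [:-u, 1:] ^ (e u) * q1" "poly q1 u \<noteq> 0" and e1: "1 \<le> e u"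
        using Pord 1 by blast
      have qu: "poly q u = 0" using Pdef 1 by auto
      have pu: "poly p u \<noteq> 0" by (rule coprime_root[OF pqcop qu])
      have lim: "((\<lambda>z. cmod (Df p q z) / cmod (z - u) powr k u) \<longlongrightarrow>
            real (e u) * cmod (poly p u) / cmod (poly q1 u)) (at u)"
        using pole_limit[OF q1 e1 pu] 1 unfolding k_def by simp
      have Lp: "0 < real (e u) * cmod (poly p u) / cmod (poly q1 u)" using e1 pu q1(2) by simp
      have uW: "u \<in> W" using 1 unfolding W_def by auto
      show ?thesis unfolding G_def
        by (rule G_local_in[where F="\<lambda>z. cmod (Df p q z)" and k=k, OF Wfin uW lim Lp])
    next
      case 2
      have nP: "u \<notin> P" using 2 ZP by auto
      have qu: "poly q u \<noteq> 0" using Zsph 2 by auto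
      have Bu: "poly B u \<noteq> 0" by (rule B_nonzero[OF cop[folded Z_def] Zfin[folded Z_def] 2])
      have lim: "((\<lambda>z. cmod (Df p q z) / cmod (z - u) powr k u) \<longlongrightarrow>
            cmod ((\<Prod>zi\<in>Z - {u}. u - zi) * poly A u / poly B u)) (at u)"
        using crit_limit[OF eqn' Zfin[folded Z_def] 2 qu Bu] nP unfolding k_def by simp
      have "(\<Prod>zi\<in>Z - {u}. u - zi) \<noteq> 0" using Zfin unfolding Z_def[symmetric] by auto
      then have Lp: "0 < cmod ((\<Prod>zi\<in>Z - {u}. u - zi) * poly A u / poly B u)"
        using Anz u Bu by simp
      have uW: "u \<in> W" using 2 unfolding W_def by auto
      show ?thesis unfolding G_def
        by (rule G_local_in[where F="\<lambda>z. cmod (Df p q z)" and k=k, OF Wfin uW lim Lp])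
    next
      case 3
      have qu: "poly q u \<noteq> 0" using Pdef u 3 unfolding W_def by auto
      have "u \<notin> crit_T p q" using 3 unfolding W_def Z_def by auto
      then have "deriv (ratfun p q) u \<noteq> 0" using u qu unfolding crit_T_def by auto
      then have Du: "Df p q u \<noteq> 0" using deriv_ratfun_eq[OF qu] by simp
      have lim: "((\<lambda>z. cmod (Df p q z)) \<longlongrightarrow> cmod (Df p q u)) (at u)"
        using Df_cont[OF qu] unfolding isCont_def by (intro tendsto_norm)
      show ?thesis unfolding G_def
        by (rule G_local_out[where F="\<lambda>z. cmod (Df p q z)" and k=k, OF Wfin 3 lim]) (use Du in simp)
    qed
  qed
  obtain r1 c C where r1: "r1 < 1" and c: "0 < c"
    and GB: "\<And>z. r1 < cmod z \<and> cmod z < 1 \<Longrightarrow> c \<le> G z \<and> G z \<le> C"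
    using unif_bounds[of G] loc by metis
  define r2 where "r2 = max r1 0"
  have r2: "r2 < 1" "0 \<le> r2" unfolding r2_def using r1 by auto
  define Cm where "Cm = max C c"
  have Cm: "0 < Cm" unfolding Cm_def using c by simp
  define c' where "c' = min (c powr \<tau>) (Cm powr \<tau>)"
  define C' where "C' = max (c powr \<tau>) (Cm powr \<tau>)"
  have c'pos: "0 < c'" unfolding c'_def using c Cm by simp
  define f where "f = (\<lambda>r. integral {-pi..pi} (\<lambda>\<theta>. cmod (deriv (ratfun p q) (complex_of_real r * cis \<theta>)) powr \<tau>))"
  have pw: "c' * Jf W \<alpha> r \<theta> \<le> cmod (Df p q (complex_of_real r * cis \<theta>)) powr \<tau>
      \<and> cmod (Df p q (complex_of_real r * cis \<theta>)) powr \<tau> \<le> C' * Jf W \<alpha> r \<theta>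
      \<and> 0 < cmod (Df p q (complex_of_real r * cis \<theta>))"
    if r: "r2 < r" "r < 1" for r \<theta>
  proof -
    define z where "z = complex_of_real r * cis \<theta>"
    have rz: "cmod z = r" unfolding z_def using r r2 by (simp add: norm_mult)
    have zw: "0 < cmod (z - w)" if "w \<in> W" for w
      using Wsph that rz r by auto
    define M where "M = (\<Prod>w\<in>W. cmod (z - w) powr k w)"
    have Mpos: "0 < M" unfolding M_def using zw by (intro prod_pos) auto
    have Gb: "c \<le> G z \<and> G z \<le> Cm" using GB[of z] rz r r2 unfolding r2_def Cm_def by auto
    have DGM: "cmod (Df p q z) = G z * M" unfolding G_def M_def[symmetric] using Mpos by simp
    have MJ: "M powr \<tau> = Jf W \<alpha> r \<theta>"
      unfolding M_def Jf_def z_def \<alpha>_def prod_powr_distrib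
      by (intro prod.cong refl) (simp add: powr_powr)
    have Gpos: "0 < G z" using Gb c by linarith
    have split: "cmod (Df p q z) powr \<tau> = G z powr \<tau> * Jf W \<alpha> r \<theta>"
      unfolding DGM MJ[symmetric] using Gpos Mpos by (simp add: powr_mult)
    have lo: "c' \<le> G z powr \<tau>" unfolding c'_def by (rule powr_between(1)) (use c Gb in auto)
    have hi: "G z powr \<tau> \<le> C'" unfolding C'_def by (rule powr_between(2)) (use c Gb in auto)
    have J0: "0 \<le> Jf W \<alpha> r \<theta>" by (rule Jf_nonneg)
    show ?thesis unfolding z_def[symmetric] split
      using mult_right_mono[OF lo J0] mult_right_mono[OF hi J0] DGM Gpos Mpos by auto
  qed
  have fbounds: "c' * integral {-pi..pi} (Jf W \<alpha> r) \<le> f r \<and> f r \<le> C' * integral {-pi..pi} (Jf W \<alpha> r)"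
    if r: "r2 < r" "r < 1" for r
  proof -
    have r0: "0 \<le> r" using r r2 by auto
    have qz: "poly q (complex_of_real r * cis x) \<noteq> 0" for x
      by (rule qdisk) (use r r0 in \<open>simp add: norm_mult\<close>)
    have feq: "f r = integral {-pi..pi} (\<lambda>\<theta>. cmod (Df p q (complex_of_real r * cis \<theta>)) powr \<tau>)"
      unfolding f_def using deriv_ratfun_eq[OF qz] by simp
    have Ji: "Jf W \<alpha> r integrable_on {-pi..pi}" by (rule Jf_integrable) (use r0 r Wsph in auto)
    have Fi: "(\<lambda>\<theta>. cmod (Df p q (complex_of_real r * cis \<theta>)) powr \<tau>) integrable_on {-pi..pi}"
    proof (rule integrable_continuous_interval, rule continuous_on_powr)
      show "continuous_on {-pi..pi} (\<lambda>\<theta>. cmod (Df p q (complex_of_real r * cis \<theta>)))"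
        by (intro continuous_on_norm cis_path_cont qz)
      show "\<forall>x\<in>{-pi..pi}. cmod (Df p q (complex_of_real r * cis x)) \<noteq> 0" using pw[OF r] by force
    qed (rule continuous_on_const)
    have "c' * integral {-pi..pi} (Jf W \<alpha> r) = integral {-pi..pi} (\<lambda>\<theta>. c' * Jf W \<alpha> r \<theta>)"
      by (rule integral_mult[OF Ji])
    also have "\<dots> \<le> f r" unfolding feq
      by (rule integral_le[OF integrable_on_mult_right[OF Ji] Fi]) (use pw[OF r] in auto)
    finally have 1: "c' * integral {-pi..pi} (Jf W \<alpha> r) \<le> f r" .
    have "f r \<le> integral {-pi..pi} (\<lambda>\<theta>. C' * Jf W \<alpha> r \<theta>)" unfolding feq
      by (rule integral_le[OF Fi integrable_on_mult_right[OF Ji]]) (use pw[OF r] in auto)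
    also have "\<dots> = C' * integral {-pi..pi} (Jf W \<alpha> r)" by (rule integral_mult[OF Ji, symmetric])
    finally show ?thesis using 1 by simp
  qed
  have \<beta>0: "0 \<le> \<beta>" unfolding \<beta>_def using Wfin by (intro Max_ge) auto
  have \<beta>ge: "\<forall>w\<in>W. - \<alpha> w - 1 \<le> \<beta>" unfolding \<beta>_def using Wfin by (auto intro: Max_ge)
  have \<beta>in: "\<beta> \<in> insert 0 ((\<lambda>w. - \<alpha> w - 1) ` W)" unfolding \<beta>_def using Wfin by (intro Max_in) auto
  have lower: "\<exists>c>0. \<exists>r0<1. \<forall>r. r0 \<le> r \<and> r < 1 \<longrightarrow> c * (1 - r) powr (-\<beta>) \<le> f r"
  proof (cases "\<beta> = 0")
    case True
    obtain c0 r0 where c0: "0 < c0" "r0 < 1" "0 \<le> r0"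
      "\<forall>r. r0 \<le> r \<and> r < 1 \<longrightarrow> c0 \<le> integral {-pi..pi} (Jf W \<alpha> r)"
      using J_lower0[OF Wfin Wsph, of \<alpha>] by blast
    have "\<forall>r. max r0 ((r2 + 1)/2) \<le> r \<and> r < 1 \<longrightarrow> (c' * c0) * (1 - r) powr (-\<beta>) \<le> f r"
    proof (intro allI impI)
      fix r assume r: "max r0 ((r2 + 1)/2) \<le> r \<and> r < 1"
      have rr: "r2 < r" "r < 1" using r r2 by auto
      have "c' * c0 \<le> c' * integral {-pi..pi} (Jf W \<alpha> r)"
        using c0(4) r c'pos by (intro mult_left_mono) auto
      then show "(c' * c0) * (1 - r) powr (-\<beta>) \<le> f r" using fbounds[OF rr] True r by simp
    qed
    moreover have "max r0 ((r2 + 1)/2) < 1" using c0 r2 by auto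
    moreover have "0 < c' * c0" using c'pos c0 by simp
    ultimately show ?thesis by blast
  next
    case False
    then obtain w0 where w0: "w0 \<in> W" "\<beta> = - \<alpha> w0 - 1" using \<beta>in by auto
    have a0: "\<alpha> w0 < 0" using w0 \<beta>0 False by linarith
    obtain c0 r0 where c0: "0 < c0" "r0 < 1" "0 \<le> r0"
      "\<forall>r. r0 \<le> r \<and> r < 1 \<longrightarrow> c0 * (1 - r) powr (\<alpha> w0 + 1) \<le> integral {-pi..pi} (Jf W \<alpha> r)"
      using J_lower1[where \<alpha>=\<alpha>, OF Wfin Wsph w0(1) a0] by blast
    have ex: "\<alpha> w0 + 1 = - \<beta>" using w0 by simp
    have "\<forall>r. max r0 ((r2 + 1)/2) \<le> r \<and> r < 1 \<longrightarrow> (c' * c0) * (1 - r) powr (-\<beta>) \<le> f r"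
    proof (intro allI impI)
      fix r assume r: "max r0 ((r2 + 1)/2) \<le> r \<and> r < 1"
      have rr: "r2 < r" "r < 1" using r r2 by auto
      have "c' * (c0 * (1 - r) powr (-\<beta>)) \<le> c' * integral {-pi..pi} (Jf W \<alpha> r)"
        using c0(4) r c'pos ex by (intro mult_left_mono) auto
      then show "(c' * c0) * (1 - r) powr (-\<beta>) \<le> f r" using fbounds[OF rr] by (simp add: mult.assoc)
    qed
    moreover have "max r0 ((r2 + 1)/2) < 1" using c0 r2 by auto
    moreover have "0 < c' * c0" using c'pos c0 by simp
    ultimately show ?thesis by blast
  qed
  have upper: "\<forall>e. 0 < e \<and> e < 1 \<longrightarrow> (\<exists>C. \<exists>r0<1. \<forall>r. r0 \<le> r \<and> r < 1 \<longrightarrow> f r \<le> C * (1 - r) powr (-\<beta> - e))"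
  proof (intro allI impI)
    fix \<epsilon> :: real assume \<epsilon>: "0 < \<epsilon> \<and> \<epsilon> < 1"
    obtain Ce where Ce: "\<forall>r. 0 \<le> r \<and> r < 1 \<longrightarrow> integral {-pi..pi} (Jf W \<alpha> r) \<le> Ce * (1 - r) powr (-\<beta> - \<epsilon>)"
      using J_upper[where \<alpha>=\<alpha> and e=\<epsilon>, OF Wfin Wsph _ _ \<beta>0 \<beta>ge] \<epsilon> by blast
    have "\<forall>r. (r2 + 1)/2 \<le> r \<and> r < 1 \<longrightarrow> f r \<le> (C' * Ce) * (1 - r) powr (-\<beta> - \<epsilon>)"
    proof (intro allI impI)
      fix r assume r: "(r2 + 1)/2 \<le> r \<and> r < 1"
      have rr: "r2 < r" "r < 1" using r r2 by auto
      have C'pos: "0 \<le> C'" unfolding C'_def by (simp add: le_max_iff_disj)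
      have "C' * integral {-pi..pi} (Jf W \<alpha> r) \<le> C' * (Ce * (1 - r) powr (-\<beta> - \<epsilon>))"
        using Ce rr r2 C'pos by (intro mult_left_mono) auto
      then show "f r \<le> (C' * Ce) * (1 - r) powr (-\<beta> - \<epsilon>)" using fbounds[OF rr] by (simp add: mult.assoc)
    qed
    moreover have "(r2 + 1)/2 < 1" using r2 by auto
    ultimately show "\<exists>C. \<exists>r0<1. \<forall>r. r0 \<le> r \<and> r < 1 \<longrightarrow> f r \<le> C * (1 - r) powr (-\<beta> - \<epsilon>)" by blast
  qed
  have "beta_tilde p q \<tau> = ereal \<beta>"
    unfolding beta_tilde_def using Limsup_from_bounds[OF lower upper] unfolding f_def .
  then show ?thesis unfolding \<beta>_def \<alpha>_def k_def W_def Z_def .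
qed

definition betaF :: "complex set \<Rightarrow> complex set \<Rightarrow> (complex \<Rightarrow> nat) \<Rightarrow> real \<Rightarrow> real" where
  "betaF X P e \<tau> = Max (insert 0 ((\<lambda>w. - ((if w \<in> P then - (real (e w) + 1) else 1) * \<tau>) - 1) ` (X \<union> P)))"

lemma core_RO:
  assumes RO: "classRO p q"
    and Pfin: "finite P" and Pdef: "\<forall>u. u \<in> P \<longleftrightarrow> cmod u = 1 \<and> poly q u = 0"
    and Pord: "\<forall>u\<in>P. 1 \<le> e u \<and> (\<exists>q1. q = [:-u, 1:] ^ (e u) * q1 \<and> poly q1 u \<noteq> 0)"
  shows "beta_tilde p q \<tau> = ereal (betaF (crit_T p q) P e \<tau>)"
proof -
  obtain A B where R: "classR p q" and Zfin: "finite (crit_T p q)"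
    and cop: "coprime ((\<Prod>z\<in>crit_T p q. [:-z, 1:]) * A) B"
    and Anz: "\<forall>z. cmod z = 1 \<longrightarrow> poly A z \<noteq> 0"
    and eqn: "(\<Prod>z\<in>crit_T p q. [:-z, 1:]) * A * q ^ 2 = (pderiv p * q - p * pderiv q) * B"
    using RO unfolding classRO_def by blast
  show ?thesis unfolding betaF_def
    by (rule core[OF R Zfin eqn cop Anz Pfin Pdef Pord])
qed

lemma poly_lin_prod2: "poly (\<Prod>a\<in>S. [:-a,1:] ^ 2) (x::complex) = (\<Prod>a\<in>S. (x - a) ^ 2)"
  unfolding poly_prod by (intro prod.cong refl) simp

lemma L1_beta:
  assumes "classRO p q" "classL1 p q"
  shows "beta_tilde p q \<tau> = ereal (betaF (crit_T p q) {} (\<lambda>_. 1) \<tau>)"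
proof (rule core_RO[OF assms(1)])
  show "\<forall>u. u \<in> {} \<longleftrightarrow> cmod u = 1 \<and> poly q u = 0"
    using assms(2) unfolding classL1_def by auto
qed auto

lemma L2_beta:
  assumes "classRO p q" "classL2 p q"
  shows "\<exists>S. finite S \<and> S \<noteq> {} \<and> S \<inter> crit_T p q = {} \<and>
           beta_tilde p q \<tau> = ereal (betaF (crit_T p q) S (\<lambda>_. 1) \<tau>)"
proof -
  obtain S m where S: "finite S" "S \<noteq> {}" "\<forall>a\<in>S. cmod a = 1"
    and m: "\<forall>z. cmod z \<le> 1 \<longrightarrow> poly m z \<noteq> 0" and q: "q = (\<Prod>a\<in>S. [:-a, 1:]) * m"
    using assms(2) unfolding classL2_def by blast
  have qz: "poly q u = (\<Prod>a\<in>S. u - a) * poly m u" for u unfolding q by (simp add: poly_lin_prod)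
  have Pdef: "\<forall>u. u \<in> S \<longleftrightarrow> cmod u = 1 \<and> poly q u = 0"
  proof (intro allI iffI)
    fix u assume u: "u \<in> S"
    then show "cmod u = 1 \<and> poly q u = 0" using S u unfolding qz by (auto simp: prod_zero_iff)
  next
    fix u assume u: "cmod u = 1 \<and> poly q u = 0"
    then have "poly m u \<noteq> 0" using m by auto
    then have "(\<Prod>a\<in>S. u - a) = 0" using u qz by simp
    then show "u \<in> S" using S by (auto simp: prod_zero_iff)
  qed
  have Pord: "\<forall>u\<in>S. 1 \<le> (\<lambda>_. 1::nat) u \<and> (\<exists>q1. q = [:-u, 1:] ^ ((\<lambda>_. 1::nat) u) * q1 \<and> poly q1 u \<noteq> 0)"
  proof
    fix u assume u: "u \<in> S"
    define q1 where "q1 = (\<Prod>a\<in>S - {u}. [:-a, 1:]) * m"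
    have "q = [:-u, 1:] ^ 1 * q1" unfolding q q1_def using prod.remove[OF S(1) u, of "\<lambda>a. [:-a, 1:]"]
      by (simp add: ac_simps)
    moreover have "poly q1 u \<noteq> 0" unfolding q1_def using m S u by (auto simp: poly_lin_prod prod_zero_iff)
    ultimately show "1 \<le> (\<lambda>_. 1::nat) u \<and> (\<exists>q1. q = [:-u, 1:] ^ ((\<lambda>_. 1::nat) u) * q1 \<and> poly q1 u \<noteq> 0)" by auto
  qed
  have "S \<inter> crit_T p q = {}" using Pdef unfolding crit_T_def by auto
  then show ?thesis using core_RO[OF assms(1) S(1) Pdef Pord] S by blast
qed

lemma L3_beta:
  assumes "classRO p q" "classL3 p q"
  shows "\<exists>S T. finite S \<and> finite T \<and> S \<noteq> {} \<and> S \<inter> T = {} \<and> (S \<union> T) \<inter> crit_T p q = {} \<and>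
           beta_tilde p q \<tau> = ereal (betaF (crit_T p q) (S \<union> T) (\<lambda>u. if u \<in> S then 2 else 1) \<tau>)"
proof -
  obtain S T m where S: "finite S" "S \<noteq> {}" "finite T" "S \<inter> T = {}" "\<forall>a\<in>S. cmod a = 1" "\<forall>b\<in>T. cmod b = 1"
    and m: "\<forall>z. cmod z \<le> 1 \<longrightarrow> poly m z \<noteq> 0"
    and q: "q = (\<Prod>a\<in>S. [:-a, 1:] ^ 2) * (\<Prod>b\<in>T. [:-b, 1:]) * m"
    using assms(2) unfolding classL3_def by blast
  define e where "e = (\<lambda>u. if u \<in> S then 2 else (1::nat))"
  have qz: "poly q u = (\<Prod>a\<in>S. (u - a)^2) * (\<Prod>b\<in>T. u - b) * poly m u" for u
    unfolding q by (simp add: poly_lin_prod poly_lin_prod2)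
  have Pfin: "finite (S \<union> T)" using S by auto
  have Pdef: "\<forall>u. u \<in> S \<union> T \<longleftrightarrow> cmod u = 1 \<and> poly q u = 0"
  proof (intro allI iffI)
    fix u assume u: "u \<in> S \<union> T"
    then show "cmod u = 1 \<and> poly q u = 0" using S u unfolding qz by (auto simp: prod_zero_iff)
  next
    fix u assume u: "cmod u = 1 \<and> poly q u = 0"
    then have "poly m u \<noteq> 0" using m by auto
    then have "(\<Prod>a\<in>S. (u - a)^2) = 0 \<or> (\<Prod>b\<in>T. u - b) = 0" using u qz by simp
    then show "u \<in> S \<union> T" using S by (auto simp: prod_zero_iff)
  qed
  have Pord: "\<forall>u\<in>S \<union> T. 1 \<le> e u \<and> (\<exists>q1. q = [:-u, 1:] ^ (e u) * q1 \<and> poly q1 u \<noteq> 0)"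
  proof
    fix u assume u: "u \<in> S \<union> T"
    show "1 \<le> e u \<and> (\<exists>q1. q = [:-u, 1:] ^ (e u) * q1 \<and> poly q1 u \<noteq> 0)"
    proof (cases "u \<in> S")
      case True
      have uT: "u \<notin> T" using True S by auto
      define q1 where "q1 = (\<Prod>a\<in>S - {u}. [:-a, 1:] ^ 2) * (\<Prod>b\<in>T. [:-b, 1:]) * m"
      have "q = [:-u, 1:] ^ 2 * q1" unfolding q q1_def using prod.remove[OF S(1) True, of "\<lambda>a. [:-a, 1:] ^ 2"]
        by (simp add: ac_simps)
      moreover have "poly q1 u \<noteq> 0" unfolding q1_def using m S True uT
        by (auto simp: poly_lin_prod poly_lin_prod2 prod_zero_iff)
      ultimately show ?thesis unfolding e_def using True by auto
    next
      case False
      then have uT: "u \<in> T" using u by auto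
      define q1 where "q1 = (\<Prod>a\<in>S. [:-a, 1:] ^ 2) * (\<Prod>b\<in>T - {u}. [:-b, 1:]) * m"
      have eq: "(\<Prod>b\<in>T. [:-b, 1:]) = [:-u, 1:] * (\<Prod>b\<in>T - {u}. [:-b, 1:])"
        by (rule prod.remove[OF S(3) uT])
      have "q = [:-u, 1:] ^ 1 * q1" unfolding q q1_def eq by (simp only: power_one_right mult_ac)
      moreover have "poly q1 u \<noteq> 0" unfolding q1_def using m S False uT
        by (auto simp: poly_lin_prod poly_lin_prod2 prod_zero_iff)
      ultimately show ?thesis unfolding e_def using False by auto
    qed
  qed
  have "(S \<union> T) \<inter> crit_T p q = {}" using Pdef unfolding crit_T_def by auto
  then show ?thesis using core_RO[OF assms(1) Pfin Pdef Pord] S unfolding e_def by blast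
qed

lemma betaF_eval:
  assumes fin: "finite X" "finite P" and disj: "P \<inter> X = {}"
    and att: "v = 0 \<or> (\<exists>w\<in>X. -\<tau> - 1 = v) \<or> (\<exists>w\<in>P. (real (e w) + 1) * \<tau> - 1 = v)"
    and bX: "\<forall>w\<in>X. -\<tau> - 1 \<le> v" and bP: "\<forall>w\<in>P. (real (e w) + 1) * \<tau> - 1 \<le> v" and v0: "0 \<le> v"
  shows "betaF X P e \<tau> = v"
proof -
  define g where "g = (\<lambda>w. - ((if w \<in> P then - (real (e w) + 1) else 1) * \<tau>) - 1)"
  have gX: "g w = -\<tau> - 1" if "w \<in> X" for w using that disj unfolding g_def by auto
  have gP: "g w = (real (e w) + 1) * \<tau> - 1" if "w \<in> P" for w using that unfolding g_def by (auto simp: algebra_simps)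
  have "Max (insert 0 (g ` (X \<union> P))) = v"
  proof (rule Max_eqI)
    show "finite (insert 0 (g ` (X \<union> P)))" using fin by auto
    show "y \<le> v" if "y \<in> insert 0 (g ` (X \<union> P))" for y
      using that bX bP v0 gX gP by auto
    show "v \<in> insert 0 (g ` (X \<union> P))"
      using att gX gP by (auto simp: image_iff) (metis UnI1 UnI2)+
  qed
  then show ?thesis unfolding betaF_def g_def .
qed

theorem mainTheorem5:
  fixes p q :: "complex poly" and \<tau> :: real
  assumes "classRO p q"
    and "classL1 p q \<or> classL2 p q \<or> classL3 p q"
  shows "(\<tau> = 0 \<longrightarrow> beta_tilde p q \<tau> = 0)
    \<and> (\<tau> < 0 \<longrightarrow>
        (crit_T p q = {} \<longrightarrow> beta_tilde p q \<tau> = 0) \<and>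
        (crit_T p q \<noteq> {} \<longrightarrow>
           (-1 < \<tau> \<longrightarrow> beta_tilde p q \<tau> = 0) \<and>
           (\<tau> \<le> -1 \<longrightarrow> beta_tilde p q \<tau> = ereal (\<bar>\<tau>\<bar> - 1))))
    \<and> (0 < \<tau> \<longrightarrow>
        (classL1 p q \<longrightarrow> beta_tilde p q \<tau> = 0) \<and>
        (classL2 p q \<longrightarrow>
           (1/2 < \<tau> \<longrightarrow> beta_tilde p q \<tau> = ereal (2 * \<tau> - 1)) \<and>
           (\<tau> \<le> 1/2 \<longrightarrow> beta_tilde p q \<tau> = 0)) \<and>
        (classL3 p q \<longrightarrow>
           (1/3 < \<tau> \<longrightarrow> beta_tilde p q \<tau> = ereal (3 * \<tau> - 1)) \<and>
           (\<tau> \<le> 1/3 \<longrightarrow> beta_tilde p q \<tau> = 0)))"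
proof -
  define X where "X = crit_T p q"
  have Xfin: "finite X" using assms(1) unfolding classRO_def X_def by blast
  have gen: "\<exists>P e. finite P \<and> P \<inter> X = {} \<and> beta_tilde p q \<tau> = ereal (betaF X P e \<tau>)"
    using assms(2)
  proof (elim disjE)
    assume "classL1 p q"
    then show ?thesis using L1_beta[OF assms(1)] unfolding X_def by blast
  next
    assume "classL2 p q"
    then show ?thesis using L2_beta[OF assms(1)] unfolding X_def by blast
  next
    assume "classL3 p q"
    then show ?thesis using L3_beta[OF assms(1), of \<tau>] unfolding X_def
      by (metis finite_UnI)
  qed
  then obtain P e where P: "finite P" "P \<inter> X = {}" and bt: "beta_tilde p q \<tau> = ereal (betaF X P e \<tau>)"
    by blast
  have A: "\<tau> = 0 \<longrightarrow> beta_tilde p q \<tau> = 0"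
  proof
    assume t: "\<tau> = 0"
    have "betaF X P e \<tau> = 0" by (rule betaF_eval[OF Xfin P]) (use t in auto)
    then show "beta_tilde p q \<tau> = 0" using bt by (simp add: zero_ereal_def)
  qed
  have B: "\<tau> < 0 \<longrightarrow>
        (crit_T p q = {} \<longrightarrow> beta_tilde p q \<tau> = 0) \<and>
        (crit_T p q \<noteq> {} \<longrightarrow>
           (-1 < \<tau> \<longrightarrow> beta_tilde p q \<tau> = 0) \<and>
           (\<tau> \<le> -1 \<longrightarrow> beta_tilde p q \<tau> = ereal (\<bar>\<tau>\<bar> - 1)))"
  proof (intro impI conjI)
    assume t: "\<tau> < 0"
    have Pneg: "\<forall>w\<in>P. (real (e w) + 1) * \<tau> - 1 \<le> 0"
    proof
      fix w
      have "0 \<le> real (e w) + 1" by simp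
      then have "(real (e w) + 1) * \<tau> \<le> 0" using t by (simp add: mult_nonneg_nonpos)
      then show "(real (e w) + 1) * \<tau> - 1 \<le> 0" by simp
    qed
    show "crit_T p q = {} \<Longrightarrow> beta_tilde p q \<tau> = 0"
    proof -
      assume "crit_T p q = {}"
      then have "X = {}" unfolding X_def .
      then have "betaF X P e \<tau> = 0" by (intro betaF_eval[OF Xfin P]) (use Pneg in auto)
      then show ?thesis using bt by (simp add: zero_ereal_def)
    qed
    assume ne: "crit_T p q \<noteq> {}"
    then obtain x where x: "x \<in> X" unfolding X_def by auto
    show "-1 < \<tau> \<Longrightarrow> beta_tilde p q \<tau> = 0"
    proof -
      assume "-1 < \<tau>"
      then have "betaF X P e \<tau> = 0" by (intro betaF_eval[OF Xfin P]) (use Pneg in auto)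
      then show ?thesis using bt by (simp add: zero_ereal_def)
    qed
    show "\<tau> \<le> -1 \<Longrightarrow> beta_tilde p q \<tau> = ereal (\<bar>\<tau>\<bar> - 1)"
    proof -
      assume t1: "\<tau> \<le> -1"
      have "betaF X P e \<tau> = \<bar>\<tau>\<bar> - 1"
      proof (rule betaF_eval[OF Xfin P])
        show "\<bar>\<tau>\<bar> - 1 = 0 \<or> (\<exists>w\<in>X. -\<tau> - 1 = \<bar>\<tau>\<bar> - 1) \<or> (\<exists>w\<in>P. (real (e w) + 1) * \<tau> - 1 = \<bar>\<tau>\<bar> - 1)"
          using x t by auto
        show "\<forall>w\<in>P. (real (e w) + 1) * \<tau> - 1 \<le> \<bar>\<tau>\<bar> - 1" using Pneg t1 by fastforce
      qed (use t t1 in auto)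
      then show ?thesis using bt by simp
    qed
  qed
  have C: "0 < \<tau> \<longrightarrow>
        (classL1 p q \<longrightarrow> beta_tilde p q \<tau> = 0) \<and>
        (classL2 p q \<longrightarrow>
           (1/2 < \<tau> \<longrightarrow> beta_tilde p q \<tau> = ereal (2 * \<tau> - 1)) \<and>
           (\<tau> \<le> 1/2 \<longrightarrow> beta_tilde p q \<tau> = 0)) \<and>
        (classL3 p q \<longrightarrow>
           (1/3 < \<tau> \<longrightarrow> beta_tilde p q \<tau> = ereal (3 * \<tau> - 1)) \<and>
           (\<tau> \<le> 1/3 \<longrightarrow> beta_tilde p q \<tau> = 0))"
  proof (intro impI conjI)
    assume t: "0 < \<tau>"
    have Xneg: "\<forall>w\<in>X. -\<tau> - 1 \<le> 0" using t by auto
    show "classL1 p q \<Longrightarrow> beta_tilde p q \<tau> = 0"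
    proof -
      assume L: "classL1 p q"
      have "betaF X {} (\<lambda>_. 1) \<tau> = 0" by (rule betaF_eval[OF Xfin]) (use t in auto)
      then show ?thesis using L1_beta[OF assms(1) L] unfolding X_def by (simp add: zero_ereal_def)
    qed
    show "classL2 p q \<Longrightarrow> 1/2 < \<tau> \<Longrightarrow> beta_tilde p q \<tau> = ereal (2 * \<tau> - 1)"
    proof -
      assume L: "classL2 p q" and t2: "1/2 < \<tau>"
      obtain S where S: "finite S" "S \<noteq> {}" "S \<inter> X = {}" and b: "beta_tilde p q \<tau> = ereal (betaF X S (\<lambda>_. 1) \<tau>)"
        using L2_beta[OF assms(1) L, of \<tau>] unfolding X_def by blast
      obtain s where s: "s \<in> S" using S by auto
      have "betaF X S (\<lambda>_. 1) \<tau> = 2 * \<tau> - 1"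
        by (rule betaF_eval[OF Xfin S(1) S(3)]) (use s t t2 in auto)
      then show ?thesis using b by simp
    qed
    show "classL2 p q \<Longrightarrow> \<tau> \<le> 1/2 \<Longrightarrow> beta_tilde p q \<tau> = 0"
    proof -
      assume L: "classL2 p q" and t2: "\<tau> \<le> 1/2"
      obtain S where S: "finite S" "S \<noteq> {}" "S \<inter> X = {}" and b: "beta_tilde p q \<tau> = ereal (betaF X S (\<lambda>_. 1) \<tau>)"
        using L2_beta[OF assms(1) L, of \<tau>] unfolding X_def by blast
      have "betaF X S (\<lambda>_. 1) \<tau> = 0"
        by (rule betaF_eval[OF Xfin S(1) S(3)]) (use t t2 in auto)
      then show ?thesis using b by (simp add: zero_ereal_def)
    qed
    show "classL3 p q \<Longrightarrow> 1/3 < \<tau> \<Longrightarrow> beta_tilde p q \<tau> = ereal (3 * \<tau> - 1)"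
    proof -
      assume L: "classL3 p q" and t3: "1/3 < \<tau>"
      obtain S T where S: "finite S" "finite T" "S \<noteq> {}" "S \<inter> T = {}" "(S \<union> T) \<inter> X = {}"
        and b: "beta_tilde p q \<tau> = ereal (betaF X (S \<union> T) (\<lambda>u. if u \<in> S then 2 else 1) \<tau>)"
        using L3_beta[OF assms(1) L, of \<tau>] unfolding X_def by blast
      obtain s where s: "s \<in> S" using S by auto
      have "betaF X (S \<union> T) (\<lambda>u. if u \<in> S then 2 else 1) \<tau> = 3 * \<tau> - 1"
      proof (rule betaF_eval[OF Xfin _ S(5)])
        show "3 * \<tau> - 1 = 0 \<or> (\<exists>w\<in>X. -\<tau> - 1 = 3 * \<tau> - 1) \<or>
          (\<exists>w\<in>S \<union> T. (real (if w \<in> S then 2 else 1) + 1) * \<tau> - 1 = 3 * \<tau> - 1)"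
          using s by auto
      qed (use S t t3 in auto)
      then show ?thesis using b by simp
    qed
    show "classL3 p q \<Longrightarrow> \<tau> \<le> 1/3 \<Longrightarrow> beta_tilde p q \<tau> = 0"
    proof -
      assume L: "classL3 p q" and t3: "\<tau> \<le> 1/3"
      obtain S T where S: "finite S" "finite T" "S \<noteq> {}" "S \<inter> T = {}" "(S \<union> T) \<inter> X = {}"
        and b: "beta_tilde p q \<tau> = ereal (betaF X (S \<union> T) (\<lambda>u. if u \<in> S then 2 else 1) \<tau>)"
        using L3_beta[OF assms(1) L, of \<tau>] unfolding X_def by blast
      have "betaF X (S \<union> T) (\<lambda>u. if u \<in> S then 2 else 1) \<tau> = 0"
        by (rule betaF_eval[OF Xfin _ S(5)]) (use S t t3 in auto)
      then show ?thesis using b by (simp add: zero_ereal_def)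
    qed
  qed
  show ?thesis using A B C by blast
qed

end
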